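(* For every $\phi \in L^1(\mathbb{R}_+)$, $f \in L^{\infty}(\mathbb{R}_+)$ and $\omega \in \Omega^*$, \[(U_{\phi}f)_{\omega}(x) = (f_{\omega} * \tilde{\phi})(x) \quad \text{for every } x \in \mathbb{R},\] where $\tilde{\phi} \in L^1(\mathbb{R})$ equals $\phi$ on $[0,\infty)$ and $0$ on $(-\infty,0)$.
   Context: $\mathbb{R}_+ = [0,\infty)$; functions are complex-valued. $(U_\phi f)(x) = \int_0^x f(t)\phi(x-t)\,dt$ for $x \ge 0$; $U_\phi f \in L^\infty(\mathbb{R}_+)$. Convolution on $\mathbb{R}$: $(g*h)(x) = \int_{-\infty}^\infty g(x-t)h(t)\,dt$. Let $\beta\mathbb{N}$ be the Stone–Čech compactification of $\mathbb{N}$ (the ultrafilters on $\mathbb{N}$), $\mathbb{N}^* = \beta\mathbb{N}\setminus\mathbb{N}$, and $\tau:\beta\mathbb{N}\to\beta\mathbb{N}$ the continuous extension of $n\mapsto n+1$ (a homeomorphism of $\mathbb{N}^*$). Let $\Omega$ be the quotient of $\beta\mathbb{N}\times[0,1]$ identifying $(\eta,1)$ with $(\tau\eta,0)$ for all $\eta$, and $\Omega^*\subseteq\Omega$ the closed set of classes $(\eta,u)$ with $\eta\in\mathbb{N}^*$. For $s\in\mathbb{R}$, $\tau^s:\Omega^*\to\Omega^*$ is $\tau^s(\eta,u) = (\tau^{[u+s]}\eta,\ u+s-[u+s])$, $[\cdot]$ the integer part. Each $\omega = (\eta,u)$ is identified with the ultrafilter on $\mathbb{R}_+$ generated by $\{u+A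 : A\in\eta\}$, and $\omega\text{-}\lim$ denotes the limit along it. For $g \in L^\infty(\mathbb{R}_+)$ and $\omega\in\Omega^*$, $g_\omega := \omega\text{-}\lim_s g(\cdot+s)$, the limit taken in the weak* topology of $L^\infty(\mathbb{R}_+)$; $g_\omega$ is extended to an element of $L^\infty(\mathbb{R})$ by $g_\omega(x) = g_{\tau^{-N}\omega}(N+x)$ for $x\in[-N,0]$, $N>0$. *)

theory Defs
  imports "HOL-Analysis.Analysis"
begin

definition Linf_Rplus :: "(real \<Rightarrow> complex) \<Rightarrow> bool" where
  "Linf_Rplus g \<longleftrightarrow> set_borel_measurable lborel {0..} g \<and>
     (\<exists>B. AE t in lborel. t \<in> {0..} \<longrightarrow> norm (g t) \<le> B)"

definition L1_Rplus :: "(real \<Rightarrow> complex) \<Rightarrow> bool" where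
  "L1_Rplus \<phi> \<longleftrightarrow> set_integrable lborel {0..} \<phi>"

definition Uop :: "(real \<Rightarrow> complex) \<Rightarrow> (real \<Rightarrow> complex) \<Rightarrow> real \<Rightarrow> complex" where
  "Uop \<phi> f x = (LINT t:{0..x}|lborel. f t * \<phi> (x - t))"

definition conv :: "(real \<Rightarrow> complex) \<Rightarrow> (real \<Rightarrow> complex) \<Rightarrow> real \<Rightarrow> complex" where
  "conv g h x = (LINT t|lborel. g (x - t) * h t)"

definition phi_tilde :: "(real \<Rightarrow> complex) \<Rightarrow> real \<Rightarrow> complex" where
  "phi_tilde \<phi> t = (if 0 \<le> t then \<phi> t else 0)"

definition ultrafilter :: "'a filter \<Rightarrow> bool" where
  "ultrafilter F \<longleftrightarrow> F \<noteq> bot \<and> (\<forall>P. eventually P F \<or> eventually (\<lambda>x. \<not> P x) F)"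

text \<open>Elements of N^* = beta N minus N: free (non-principal) ultrafilters on N.\<close>
definition free_ultrafilter_nat :: "nat filter \<Rightarrow> bool" where
  "free_ultrafilter_nat \<eta> \<longleftrightarrow> ultrafilter \<eta> \<and> \<eta> \<le> cofinite"

text \<open>tau^k on N^* for an integer k (continuous extension of n |-> n + k;
  on free ultrafilters the values of the map on finitely many n are irrelevant).\<close>
definition tau_pow :: "int \<Rightarrow> nat filter \<Rightarrow> nat filter" where
  "tau_pow k \<eta> = filtermap (\<lambda>n. nat (int n + k)) \<eta>"

text \<open>Points of Omega^* are represented by pairs (eta,u), eta free, u in [0,1];
  (eta,1) and (tau eta,0) represent the same point.
  tau^s(eta,u) = (tau^[u+s] eta, u+s-[u+s]).\<close>
definition tau_s :: "real \<Rightarrow> nat filter \<times> real \<Rightarrow> nat filter \<times> real" where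
  "tau_s s \<omega> = (tau_pow \<lfloor>snd \<omega> + s\<rfloor> (fst \<omega>), snd \<omega> + s - of_int \<lfloor>snd \<omega> + s\<rfloor>)"

definition omega_filter :: "nat filter \<times> real \<Rightarrow> real filter" where
  "omega_filter \<omega> = filtermap (\<lambda>n. snd \<omega> + real n) (fst \<omega>)"

definition weakstar_shift_lim :: "real filter \<Rightarrow> (real \<Rightarrow> complex) \<Rightarrow> (real \<Rightarrow> complex) \<Rightarrow> bool" where
  "weakstar_shift_lim F g h \<longleftrightarrow> Linf_Rplus h \<and>
     (\<forall>\<psi>. L1_Rplus \<psi> \<longrightarrow>
        ((\<lambda>s. LINT t:{0..}|lborel. g (t + s) * \<psi> t) \<longlongrightarrow>
           (LINT t:{0..}|lborel. h t * \<psi> t)) F)"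

text \<open>g_omega on R_+ (a representative of the L^oo class).\<close>
definition g_omega :: "(real \<Rightarrow> complex) \<Rightarrow> nat filter \<times> real \<Rightarrow> real \<Rightarrow> complex" where
  "g_omega g \<omega> = (SOME h. weakstar_shift_lim (omega_filter \<omega>) g h)"

text \<open>Extension to R: g_omega(x) = g_{tau^{-N} omega}(N + x) for x in [-N,0];
  we use N = ceiling(-x) for x < 0.\<close>
definition g_omega_ext :: "(real \<Rightarrow> complex) \<Rightarrow> nat filter \<times> real \<Rightarrow> real \<Rightarrow> complex" where
  "g_omega_ext g \<omega> x =
     (if 0 \<le> x then g_omega g \<omega> x
      else (let N = real_of_int \<lceil>- x\<rceil> in g_omega g (tau_s (- N) \<omega>) (N + x)))"

end

theory Submission
  imports Defs "HOL-Probability.Probability"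
begin


lemma ultrafilter_filtermap:
  assumes "ultrafilter F" shows "ultrafilter (filtermap g F)"
  using assms unfolding ultrafilter_def by (auto simp: eventually_filtermap filtermap_bot_iff)

lemma ultra_lim_exists:
  fixes Q :: "'a \<Rightarrow> complex"
  assumes U: "ultrafilter F" and ev: "eventually (\<lambda>s. norm (Q s) \<le> C) F"
  shows "\<exists>L. (Q \<longlongrightarrow> L) F"
proof -
  have cpt: "compact (cball (0::complex) C)" by simp
  have G: "filtermap Q F \<noteq> bot" using U by (simp add: ultrafilter_def filtermap_bot_iff)
  have "eventually (\<lambda>x. x \<in> cball 0 C) (filtermap Q F)"
    using ev by (simp add: eventually_filtermap)
  with cpt G obtain L where L: "inf (nhds L) (filtermap Q F) \<noteq> bot"
    unfolding compact_filter by blast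
  have "(Q \<longlongrightarrow> L) F"
    unfolding tendsto_def
  proof (intro allI impI)
    fix S :: "complex set" assume S: "open S" "L \<in> S"
    show "eventually (\<lambda>s. Q s \<in> S) F"
    proof (rule ccontr)
      assume "\<not> eventually (\<lambda>s. Q s \<in> S) F"
      with U have ev2: "eventually (\<lambda>s. Q s \<notin> S) F" unfolding ultrafilter_def by blast
      have "eventually (\<lambda>x. x \<in> S) (nhds L)" using S eventually_nhds by blast
      moreover have "eventually (\<lambda>x. x \<notin> S) (filtermap Q F)" using ev2 by (simp add: eventually_filtermap)
      ultimately have "eventually (\<lambda>x. False) (inf (nhds L) (filtermap Q F))"
        unfolding eventually_inf by blast
      with L show False by (simp add: eventually_False)
    qed
  qed
  then show ?thesis by blast
qed

lemma AE_lborel_affine: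
  fixes P :: "real \<Rightarrow> bool"
  assumes "c \<noteq> 0" "AE x in lborel. P x"
  shows "AE x in lborel. P (t + c * x)"
proof -
  from assms(2) obtain N where N: "{x \<in> space lborel. \<not> P x} \<subseteq> N" "N \<in> null_sets lborel"
    by (auto elim!: AE_E simp: null_sets_def)
  have "AE x in lborel. x \<notin> N" using N(2) by (rule AE_not_in)
  then have "AE x in lborel. t + c * x \<notin> N"
    using N(2) assms(1) by (intro AE_borel_affine) auto
  then show ?thesis by (rule AE_mp) (intro AE_I2, use N(1) in auto)
qed

lemma AE_lborel_shift:
  fixes P :: "real \<Rightarrow> bool"
  assumes "AE x in lborel. P x"
  shows "AE x in lborel. P (x + t)"
  using AE_lborel_affine[OF _ assms, of 1 t] by (simp add: add.commute)

lemma tendsto_approx: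
  fixes a :: "'a \<Rightarrow> complex"
  assumes b: "\<And>K. (b K \<longlongrightarrow> c K) F"
    and ab: "\<And>K. eventually (\<lambda>n. norm (a n - b K n) \<le> e K) F"
    and ac: "\<And>K. norm (a0 - c K) \<le> e K"
    and e: "e \<longlonglongrightarrow> 0"
  shows "(a \<longlongrightarrow> a0) F"
proof (rule tendstoI)
  fix \<epsilon> :: real assume "\<epsilon> > 0"
  then have "\<epsilon>/3 > 0" by simp
  from e[THEN tendstoD, OF this] obtain K where K: "dist (e K) 0 < \<epsilon>/3"
    by (auto simp: eventually_sequentially)
  from b[of K, THEN tendstoD, OF \<open>\<epsilon>/3 > 0\<close>] ab[of K]
  show "eventually (\<lambda>n. dist (a n) a0 < \<epsilon>) F"
  proof eventually_elim
    case (elim n)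
    have "dist (a n) a0 \<le> norm (a n - b K n) + dist (b K n) (c K) + norm (a0 - c K)"
    proof -
      have "a n - a0 = (a n - b K n) + (b K n - c K) - (a0 - c K)" by simp
      then have "norm (a n - a0) \<le> norm ((a n - b K n) + (b K n - c K)) + norm (a0 - c K)"
        using norm_triangle_ineq4[of "(a n - b K n) + (b K n - c K)" "a0 - c K"] by simp
      then have "norm (a n - a0) \<le> norm (a n - b K n) + norm (b K n - c K) + norm (a0 - c K)"
        using norm_triangle_ineq[of "a n - b K n" "b K n - c K"] by linarith
      then show ?thesis by (simp add: dist_norm)
    qed
    also have "\<dots> < \<epsilon>/3 + \<epsilon>/3 + \<epsilon>/3"
    proof -
      have "norm (a n - b K n) < \<epsilon>/3" using elim(2) K by (simp add: dist_norm)
      moreover have "norm (a0 - c K) < \<epsilon>/3" using ac[of K] K by (simp add: dist_norm)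
      ultimately show ?thesis using elim(1) by linarith
    qed
    finally show ?case by simp
  qed
qed


lemma finite_additive_Union:
  fixes \<kappa> :: "'a set \<Rightarrow> real"
  assumes add: "\<And>A C. A \<in> sets M \<Longrightarrow> C \<in> sets M \<Longrightarrow> A \<inter> C = {} \<Longrightarrow> \<kappa> (A \<union> C) = \<kappa> A + \<kappa> C"
    and e: "\<kappa> {} = 0"
    and A: "range A \<subseteq> sets M" "disjoint_family A"
    fixes n :: nat
  shows "\<kappa> (\<Union>i<n. A i) = (\<Sum>i<n. \<kappa> (A i))"
proof (induction n)
  case 0 then show ?case using e by simp
next
  case (Suc n)
  have "(\<Union>i<Suc n. A i) = (\<Union>i<n. A i) \<union> A n" by (auto simp: lessThan_Suc)
  moreover have "(\<Union>i<n. A i) \<inter> A n = {}" using A(2) by (auto simp: disjoint_family_on_def) (metis IntI empty_iff nat_neq_iff)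
  moreover have "(\<Union>i<n. A i) \<in> sets M" "A n \<in> sets M" using A(1) by auto
  ultimately show ?case using Suc add by simp
qed

lemma RN_bounded:
  fixes M :: "'a measure" and \<kappa> :: "'a set \<Rightarrow> real" and B :: real
  assumes fin: "finite_measure M" and B: "0 \<le> B"
    and bnd: "\<And>A. A \<in> sets M \<Longrightarrow> \<bar>\<kappa> A\<bar> \<le> B * measure M A"
    and add: "\<And>A C. A \<in> sets M \<Longrightarrow> C \<in> sets M \<Longrightarrow> A \<inter> C = {} \<Longrightarrow> \<kappa> (A \<union> C) = \<kappa> A + \<kappa> C"
  shows "\<exists>r \<in> borel_measurable M. (\<forall>x. \<bar>r x\<bar> \<le> B) \<and> (\<forall>A \<in> sets M. \<kappa> A = (\<integral>x. indicator A x * r x \<partial>M))"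
proof -
  interpret finite_measure M by fact
  define \<nu> where "\<nu> A = ennreal (\<kappa> A + B * measure M A)" for A
  have nn: "0 \<le> \<kappa> A + B * measure M A" if "A \<in> sets M" for A
    using bnd[OF that] by (simp add: abs_le_iff)
  have e: "\<kappa> {} = 0" using bnd[of "{}"] by simp
  have pos: "positive (sets M) \<nu>" unfolding positive_def \<nu>_def using e by simp
  have ca: "countably_additive (sets M) \<nu>"
    unfolding countably_additive_def
  proof (intro allI impI)
    fix A :: "nat \<Rightarrow> 'a set"
    assume A: "range A \<subseteq> sets M" "disjoint_family A" "\<Union> (range A) \<in> sets M"
    define U where "U = (\<Union>i. A i)"
    define A' where "A' n = (\<Union>i<n. A i)" for n
    have A'S: "A' n \<in> sets M" for n using A(1) unfolding A'_def by auto
    have US: "U \<in> sets M" using A(3) unfolding U_def by simp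
    have sub: "A' n \<subseteq> U" for n unfolding A'_def U_def by auto
    have m: "(\<lambda>i. measure M (A i)) sums measure M U"
      unfolding U_def by (rule finite_measure_UNION[OF A(1,2)])
    have UA': "(\<Union>n. A' n) = U" unfolding A'_def U_def by auto
    have inc: "incseq A'" unfolding A'_def incseq_def by (intro allI impI UN_mono) auto
    have mA': "(\<lambda>n. measure M (A' n)) \<longlonglongrightarrow> measure M U"
      using finite_Lim_measure_incseq[of A'] A'S inc UA' by auto
    have split: "\<kappa> U = \<kappa> (A' n) + \<kappa> (U - A' n)" for n
    proof -
      have "U = A' n \<union> (U - A' n)" using sub[of n] by auto
      then have "\<kappa> U = \<kappa> (A' n \<union> (U - A' n))" by simp
      also have "\<dots> = \<kappa> (A' n) + \<kappa> (U - A' n)" using A'S US by (intro add) auto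
      finally show ?thesis .
    qed
    have rest: "(\<lambda>n. \<kappa> (U - A' n)) \<longlonglongrightarrow> 0"
    proof (rule Lim_null_comparison)
      show "eventually (\<lambda>n. norm (\<kappa> (U - A' n)) \<le> B * (measure M U - measure M (A' n))) sequentially"
        using bnd[of "U - A' _"] A'S US finite_measure_Diff[OF US A'S sub] by (auto intro!: always_eventually)
      have "(\<lambda>n. B * (measure M U - measure M (A' n))) \<longlonglongrightarrow> B * (measure M U - measure M U)"
        by (intro tendsto_intros mA')
      then show "(\<lambda>n. B * (measure M U - measure M (A' n))) \<longlonglongrightarrow> 0" by simp
    qed
    have l: "(\<lambda>i. \<kappa> (A i)) sums \<kappa> U"
      unfolding sums_def
    proof -
      have "(\<lambda>n. \<kappa> U - \<kappa> (U - A' n)) \<longlonglongrightarrow> \<kappa> U - 0" by (intro tendsto_intros rest)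
      moreover have "\<kappa> U - \<kappa> (U - A' n) = (\<Sum>i<n. \<kappa> (A i))" for n
      proof -
        have "\<kappa> (A' n) = (\<Sum>i<n. \<kappa> (A i))"
          unfolding A'_def by (rule finite_additive_Union[OF add e A(1,2)])
        then show ?thesis using split[of n] by linarith
      qed
      ultimately show "(\<lambda>n. \<Sum>i<n. \<kappa> (A i)) \<longlonglongrightarrow> \<kappa> U" by simp
    qed
    have "(\<lambda>i. \<kappa> (A i) + B * measure M (A i)) sums (\<kappa> U + B * measure M U)"
      by (intro sums_add sums_mult l m)
    then have "(\<Sum>i. \<nu> (A i)) = ennreal (\<kappa> U + B * measure M U)"
      unfolding \<nu>_def using A(1) nn by (intro suminf_ennreal_eq) auto
    then show "(\<Sum>i. \<nu> (A i)) = \<nu> (\<Union> (range A))" unfolding \<nu>_def U_def by simp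
  qed
  define N where "N = measure_of (space M) (sets M) \<nu>"
  have eN: "emeasure N A = \<nu> A" if "A \<in> sets M" for A
    unfolding N_def by (rule emeasure_measure_of_sigma[OF sets.sigma_algebra_axioms pos ca that])
  have sN: "sets N = sets M"
    unfolding N_def by (simp add: sets_measure_of sets.space_closed)
  have ac: "absolutely_continuous M N"
    unfolding absolutely_continuous_def
  proof
    fix A assume A: "A \<in> null_sets M"
    then have "measure M A = 0" "A \<in> sets M" by (auto simp: measure_def)
    then have "\<kappa> A = 0" using bnd[of A] by simp
    then show "A \<in> null_sets N" using A eN sN \<open>measure M A = 0\<close> by (auto simp: \<nu>_def null_sets_def)
  qed
  obtain \<rho> where \<rho>: "\<rho> \<in> borel_measurable M" "density M \<rho> = N"
    using Radon_Nikodym[OF ac sN] by blast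
  have \<rho>int: "(\<integral>\<^sup>+x. \<rho> x * indicator A x \<partial>M) = \<nu> A" if "A \<in> sets M" for A
    using emeasure_density[OF \<rho>(1) that] \<rho>(2) eN[OF that] by simp
  have le: "AE x in M. \<rho> x \<le> ennreal (2*B)"
  proof -
    define A where "A = {x \<in> space M. ennreal (2*B) < \<rho> x}"
    have AS: "A \<in> sets M" using \<rho>(1) unfolding A_def by measurable
    have "(\<integral>\<^sup>+x. \<rho> x * indicator A x \<partial>M) =
        (\<integral>\<^sup>+x. (\<rho> x - ennreal(2*B)) * indicator A x + ennreal(2*B) * indicator A x \<partial>M)"
      by (intro nn_integral_cong) (auto simp: A_def diff_add_cancel_ennreal indicator_def less_imp_le)
    also have "\<dots> = (\<integral>\<^sup>+x. (\<rho> x - ennreal(2*B)) * indicator A x \<partial>M) + ennreal(2*B) * emeasure M A"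
      using \<rho>(1) AS by (subst nn_integral_add) (auto simp: nn_integral_cmult_indicator)
    finally have eq: "(\<integral>\<^sup>+x. \<rho> x * indicator A x \<partial>M) =
        (\<integral>\<^sup>+x. (\<rho> x - ennreal(2*B)) * indicator A x \<partial>M) + ennreal(2*B) * emeasure M A" .
    have "(\<integral>\<^sup>+x. \<rho> x * indicator A x \<partial>M) \<le> ennreal(2*B) * emeasure M A"
    proof -
      have "\<kappa> A + B * measure M A \<le> 2 * B * measure M A" using bnd[OF AS] by (simp add: abs_le_iff)
      then have "\<nu> A \<le> ennreal (2 * B * measure M A)" unfolding \<nu>_def by (simp add: ennreal_leI)
      also have "\<dots> = ennreal(2*B) * emeasure M A" using B by (simp add: emeasure_eq_measure ennreal_mult)
      finally show ?thesis using \<rho>int[OF AS] by simp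
    qed
    with eq have "ennreal(2*B) * emeasure M A + (\<integral>\<^sup>+x. (\<rho> x - ennreal(2*B)) * indicator A x \<partial>M)
        \<le> ennreal(2*B) * emeasure M A + 0" by (simp add: add.commute)
    moreover have "ennreal(2*B) * emeasure M A \<noteq> \<infinity>"
      by (simp add: emeasure_eq_measure ennreal_mult_eq_top_iff)
    ultimately have "(\<integral>\<^sup>+x. (\<rho> x - ennreal(2*B)) * indicator A x \<partial>M) = 0"
      by (simp add: ennreal_add_left_cancel_le)
    then have "AE x in M. (\<rho> x - ennreal(2*B)) * indicator A x = 0"
      using \<rho>(1) AS by (subst nn_integral_0_iff_AE[symmetric]) auto
    then show ?thesis
    proof (rule AE_mp, intro AE_I2 impI)
      fix x assume x: "x \<in> space M" "(\<rho> x - ennreal(2*B)) * indicator A x = 0"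
      show "\<rho> x \<le> ennreal (2*B)"
      proof (rule ccontr)
        assume "\<not> \<rho> x \<le> ennreal (2*B)"
        then have "x \<in> A" using x(1) unfolding A_def by auto
        with x(2) have "\<rho> x - ennreal(2*B) = 0" by simp
        then have "\<rho> x \<le> ennreal (2*B)" by (rule ennreal_minus_eq_0)
        with \<open>\<not> \<rho> x \<le> ennreal (2*B)\<close> show False by simp
      qed
    qed
  qed
  define r where "r x = enn2real (min (\<rho> x) (ennreal (2*B))) - B" for x
  have r0: "0 \<le> enn2real (min (\<rho> x) (ennreal (2*B)))" "enn2real (min (\<rho> x) (ennreal (2*B))) \<le> 2*B" for x
    using B by (auto intro!: enn2real_leI)
  have rb: "\<bar>r x\<bar> \<le> B" for x using r0[of x] unfolding r_def by (simp add: abs_le_iff)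
  have rm: "r \<in> borel_measurable M" unfolding r_def using \<rho>(1) by measurable
  have rint: "\<kappa> A = (\<integral>x. indicator A x * r x \<partial>M)" if AS: "A \<in> sets M" for A
  proof -
    define q where "q x = enn2real (min (\<rho> x) (ennreal (2*B)))" for x
    have qm: "q \<in> borel_measurable M" unfolding q_def using \<rho>(1) by measurable
    have qi: "integrable M (\<lambda>x. indicator A x * q x)"
    proof (rule integrable_const_bound[where B="2*B"])
      show "(\<lambda>x. indicator A x * q x) \<in> borel_measurable M" using AS qm by measurable
      show "AE x in M. norm (indicator A x * q x) \<le> 2 * B" using r0 B by (auto simp: q_def indicator_def)
    qed
    have bi: "integrable M (\<lambda>x. indicator A x * B)"
      using AS by (intro integrable_const_bound[where B="B"]) (auto simp: indicator_def B)
    have "(\<integral>x. indicator A x * r x \<partial>M) = (\<integral>x. indicator A x * q x - indicator A x * B \<partial>M)"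
      unfolding r_def q_def by (simp add: algebra_simps)
    also have "\<dots> = (\<integral>x. indicator A x * q x \<partial>M) - (\<integral>x. indicator A x * B \<partial>M)"
      using qi bi by (rule Bochner_Integration.integral_diff)
    also have "(\<integral>x. indicator A x * B \<partial>M) = B * measure M A"
      using AS by simp
    also have "(\<integral>x. indicator A x * q x \<partial>M) = enn2real (\<integral>\<^sup>+x. ennreal (indicator A x * q x) \<partial>M)"
    proof (rule integral_eq_nn_integral)
      show "(\<lambda>x. indicator A x * q x) \<in> borel_measurable M" using AS qm by measurable
      show "AE x in M. 0 \<le> indicator A x * q x" using r0 by (auto simp: q_def)
    qed
    also have "(\<integral>\<^sup>+x. ennreal (indicator A x * q x) \<partial>M) = (\<integral>\<^sup>+x. \<rho> x * indicator A x \<partial>M)"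
      using le
    proof (intro nn_integral_cong_AE, elim AE_mp, intro AE_I2 impI)
      fix x assume x: "\<rho> x \<le> ennreal (2*B)"
      then have "\<rho> x < top" using le_less_trans[OF x ennreal_less_top] by simp
      then show "ennreal (indicator A x * q x) = \<rho> x * indicator A x"
        using x by (auto simp: q_def indicator_def min_absorb1 ennreal_enn2real)
    qed
    also have "\<dots> = \<nu> A" by (rule \<rho>int[OF AS])
    finally show ?thesis unfolding \<nu>_def using nn[OF AS] by simp
  qed
  show ?thesis using rm rb rint by blast
qed


lemma int_bdd_mult:
  fixes p G :: "'a \<Rightarrow> complex"
  assumes p: "integrable M p" and G: "G \<in> borel_measurable M"
    and bd: "AE t in M. norm (G t) \<le> B" and B: "0 \<le> B"
  shows "integrable M (\<lambda>t. G t * p t)"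
    and "norm (\<integral>t. G t * p t \<partial>M) \<le> B * (\<integral>t. norm (p t) \<partial>M)"
proof -
  show i: "integrable M (\<lambda>t. G t * p t)"
  proof (rule Bochner_Integration.integrable_bound[of _ "\<lambda>t. B *\<^sub>R p t"])
    show "integrable M (\<lambda>t. B *\<^sub>R p t)" using p by simp
    show "(\<lambda>t. G t * p t) \<in> borel_measurable M" using G p by measurable
    show "AE t in M. norm (G t * p t) \<le> norm (B *\<^sub>R p t)"
      using bd by eventually_elim (use B in \<open>auto simp: norm_mult intro!: mult_right_mono\<close>)
  qed
  have "norm (\<integral>t. G t * p t \<partial>M) \<le> (\<integral>t. norm (G t * p t) \<partial>M)" by (rule integral_norm_bound)
  also have "\<dots> \<le> (\<integral>t. B * norm (p t) \<partial>M)"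
  proof (rule integral_mono_AE')
    show "integrable M (\<lambda>t. B * norm (p t))" using p by simp
    show "AE t in M. norm (G t * p t) \<le> B * norm (p t)"
      using bd by eventually_elim (auto simp: norm_mult intro!: mult_right_mono)
    show "AE t in M. 0 \<le> B * norm (p t)" using B by simp
  qed
  also have "\<dots> = B * (\<integral>t. norm (p t) \<partial>M)" by simp
  finally show "norm (\<integral>t. G t * p t \<partial>M) \<le> B * (\<integral>t. norm (p t) \<partial>M)" .
qed

definition W :: "real \<Rightarrow> real" where "W t = exp (- t) * indicator {0..} t"

lemma W_int: "integrable lborel W"
  using integrable.intros[OF has_bochner_integral_I0i_power_exp_m'[of 0]]
  unfolding W_def[abs_def] by simp

lemma W_nonneg[simp]: "0 \<le> W t" by (simp add: W_def)
lemma W_le1: "W t \<le> 1" by (auto simp: W_def indicator_def)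
lemma W_meas[measurable]: "W \<in> borel_measurable borel" unfolding W_def by measurable

definition Mw :: "real measure" where "Mw = density lborel (\<lambda>t. ennreal (W t))"

lemma sets_Mw[simp, measurable_cong]: "sets Mw = sets borel"
  by (simp add: Mw_def)

lemma space_Mw[simp]: "space Mw = UNIV"
  by (simp add: Mw_def)

lemma Mw_fin: "finite_measure Mw"
proof
  have "emeasure Mw (space Mw) = (\<integral>\<^sup>+t. ennreal (W t) \<partial>lborel)"
    by (simp add: Mw_def emeasure_density)
  also have "\<dots> = ennreal (\<integral>t. W t \<partial>lborel)"
    using W_int by (intro nn_integral_eq_integral) auto
  finally show "emeasure Mw (space Mw) \<noteq> \<infinity>" by simp
qed

lemma integral_Mw:
  fixes f :: "real \<Rightarrow> 'b::{banach, second_countable_topology}"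
  assumes "f \<in> borel_measurable borel"
  shows "integral\<^sup>L Mw f = (\<integral>t. W t *\<^sub>R f t \<partial>lborel)"
  unfolding Mw_def using assms by (intro integral_density) auto

lemma integrable_Mw:
  fixes f :: "real \<Rightarrow> 'b::{banach, second_countable_topology}"
  assumes "f \<in> borel_measurable borel"
  shows "integrable Mw f \<longleftrightarrow> integrable lborel (\<lambda>t. W t *\<^sub>R f t)"
  unfolding Mw_def using assms by (intro integrable_density) auto

lemma measure_Mw:
  assumes "A \<in> sets borel"
  shows "measure Mw A = (\<integral>t. indicator A t * W t \<partial>lborel)"
proof -
  interpret finite_measure Mw by (rule Mw_fin)
  have "measure Mw A = (\<integral>t. indicator A t \<partial>Mw)" using assms by simp
  also have "\<dots> = (\<integral>t. W t *\<^sub>R indicator A t \<partial>lborel)"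
    using assms by (intro integral_Mw borel_measurable_indicator)
  finally show ?thesis by (simp add: mult.commute)
qed


locale wsctx =
  fixes g :: "real \<Rightarrow> complex" and F :: "real filter" and B :: real
  assumes U: "ultrafilter F"
    and pos: "eventually (\<lambda>s. 0 \<le> s) F"
    and gm: "(\<lambda>t. indicator {0..} t *\<^sub>R g t) \<in> borel_measurable borel"
    and gB: "AE t in lborel. norm (indicator {0..} t *\<^sub>R g t) \<le> B"
    and B: "0 \<le> B"
begin

definition gb where "gb t = indicator {0..} t *\<^sub>R g t"
definition Jp where "Jp s p = (\<integral>t. gb (t + s) * p t \<partial>lborel)"
definition Lam where "Lam p = Lim F (\<lambda>s. Jp s p)"

lemma gb_meas[measurable]: "gb \<in> borel_measurable borel"
  using gm unfolding gb_def[abs_def] .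

lemma gb_shift_bd: "AE t in lborel. norm (gb (t + s)) \<le> B"
  using AE_lborel_shift[OF gB[folded gb_def], of s] .

lemma Fnb: "F \<noteq> bot" using U by (simp add: ultrafilter_def)

lemma Jp_int: "integrable lborel p \<Longrightarrow> integrable lborel (\<lambda>t. gb (t + s) * p t)"
  by (rule int_bdd_mult(1)[OF _ _ gb_shift_bd B]) measurable

lemma Jp_bd: "integrable lborel p \<Longrightarrow> norm (Jp s p) \<le> B * (\<integral>t. norm (p t) \<partial>lborel)"
  unfolding Jp_def by (rule int_bdd_mult(2)[OF _ _ gb_shift_bd B]) measurable

lemma Lam_lim: assumes "integrable lborel p" shows "((\<lambda>s. Jp s p) \<longlongrightarrow> Lam p) F"
proof -
  obtain L where "((\<lambda>s. Jp s p) \<longlongrightarrow> L) F"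
    using ultra_lim_exists[OF U, of "\<lambda>s. Jp s p"] Jp_bd[OF assms] by (auto intro!: always_eventually)
  moreover then have "Lam p = L" unfolding Lam_def using Fnb by (intro tendsto_Lim) auto
  ultimately show ?thesis by simp
qed

lemma Lam_eq: assumes "integrable lborel p" "((\<lambda>s. Jp s p) \<longlongrightarrow> L) F" shows "Lam p = L"
  using tendsto_unique[OF _ Lam_lim[OF assms(1)] assms(2)] Fnb by auto

lemma Lam_add:
  assumes p: "integrable lborel p" and q: "integrable lborel q"
  shows "Lam (\<lambda>t. p t + q t) = Lam p + Lam q"
proof (rule Lam_eq)
  show "integrable lborel (\<lambda>t. p t + q t)" using p q by simp
  have "Jp s (\<lambda>t. p t + q t) = Jp s p + Jp s q" for s
    unfolding Jp_def using Jp_int[OF p, of s] Jp_int[OF q, of s]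
    by (simp add: distrib_left)
  then show "((\<lambda>s. Jp s (\<lambda>t. p t + q t)) \<longlongrightarrow> Lam p + Lam q) F"
    using tendsto_add[OF Lam_lim[OF p] Lam_lim[OF q]] by simp
qed

lemma Lam_diff:
  assumes p: "integrable lborel p" and q: "integrable lborel q"
  shows "Lam (\<lambda>t. p t - q t) = Lam p - Lam q"
proof (rule Lam_eq)
  show "integrable lborel (\<lambda>t. p t - q t)" using p q by simp
  have "Jp s (\<lambda>t. p t - q t) = Jp s p - Jp s q" for s
    unfolding Jp_def using Jp_int[OF p, of s] Jp_int[OF q, of s]
    by (simp add: right_diff_distrib)
  then show "((\<lambda>s. Jp s (\<lambda>t. p t - q t)) \<longlongrightarrow> Lam p - Lam q) F"
    using tendsto_diff[OF Lam_lim[OF p] Lam_lim[OF q]] by simp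
qed

lemma Lam_cmult:
  assumes p: "integrable lborel p"
  shows "Lam (\<lambda>t. c * p t) = c * Lam p"
proof (rule Lam_eq)
  show "integrable lborel (\<lambda>t. c * p t)" using p by simp
  have "Jp s (\<lambda>t. c * p t) = c * Jp s p" for s
    unfolding Jp_def by (simp add: mult.left_commute)
  then show "((\<lambda>s. Jp s (\<lambda>t. c * p t)) \<longlongrightarrow> c * Lam p) F"
    using tendsto_mult[OF tendsto_const Lam_lim[OF p]] by simp
qed

lemma Lam_bd:
  assumes p: "integrable lborel p"
  shows "norm (Lam p) \<le> B * (\<integral>t. norm (p t) \<partial>lborel)"
  using tendsto_upperbound[OF tendsto_norm[OF Lam_lim[OF p]] _ ] Jp_bd[OF p] Fnb
  by (auto intro!: always_eventually)

end


context wsctx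
begin

definition pA where "pA A t = complex_of_real (indicator A t * W t)"

lemma pA_int: assumes "A \<in> sets borel" shows "integrable lborel (pA A)"
proof (rule Bochner_Integration.integrable_bound[OF W_int])
  show "pA A \<in> borel_measurable lborel" unfolding pA_def[abs_def] using assms by measurable
  show "AE x in lborel. norm (pA A x) \<le> norm (W x)"
    using W_le1 by (auto simp: pA_def indicator_def)
qed

lemma pA_norm: assumes "A \<in> sets borel" shows "(\<integral>t. norm (pA A t) \<partial>lborel) = measure Mw A"
proof -
  have "norm (pA A t) = indicator A t * W t" for t
    unfolding pA_def norm_of_real by (simp add: indicator_def)
  then show ?thesis using assms by (simp add: measure_Mw)
qed

lemma pA_bd: assumes "A \<in> sets borel" shows "norm (Lam (pA A)) \<le> B * measure Mw A"
  using Lam_bd[OF pA_int[OF assms]] pA_norm[OF assms] by simp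

lemma pA_add:
  assumes "A \<in> sets borel" "C \<in> sets borel" "A \<inter> C = {}"
  shows "Lam (pA (A \<union> C)) = Lam (pA A) + Lam (pA C)"
proof -
  have "pA (A \<union> C) = (\<lambda>t. pA A t + pA C t)"
    using assms(3) by (auto simp: pA_def fun_eq_iff indicator_def distrib_right)
  then show ?thesis using Lam_add[OF pA_int[OF assms(1)] pA_int[OF assms(2)]] by simp
qed

lemma exists_h:
  "\<exists>h. h \<in> borel_measurable borel \<and> (\<forall>t. norm (h t) \<le> 2*B) \<and>
     (\<forall>A\<in>sets borel. Lam (pA A) = (\<integral>t. indicator A t *\<^sub>R h t \<partial>Mw))"
proof -
  have fin: "finite_measure Mw" by (rule Mw_fin)
  interpret finite_measure Mw by (rule Mw_fin)
  obtain rR where rR: "rR \<in> borel_measurable Mw" "\<forall>x. \<bar>rR x\<bar> \<le> B"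
    "\<forall>A\<in>sets Mw. Re (Lam (pA A)) = (\<integral>x. indicator A x * rR x \<partial>Mw)"
  proof -
    have "\<exists>r\<in>borel_measurable Mw. (\<forall>x. \<bar>r x\<bar> \<le> B) \<and>
        (\<forall>A\<in>sets Mw. Re (Lam (pA A)) = (\<integral>x. indicator A x * r x \<partial>Mw))"
    proof (rule RN_bounded[OF fin B])
      fix A assume "A \<in> sets Mw"
      then show "\<bar>Re (Lam (pA A))\<bar> \<le> B * measure Mw A"
        using pA_bd[of A] abs_Re_le_cmod[of "Lam (pA A)"] by simp
    next
      fix A C assume "A \<in> sets Mw" "C \<in> sets Mw" "A \<inter> C = {}"
      then show "Re (Lam (pA (A \<union> C))) = Re (Lam (pA A)) + Re (Lam (pA C))"
        using pA_add by simp
    qed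
    then show ?thesis using that by blast
  qed
  obtain rI where rI: "rI \<in> borel_measurable Mw" "\<forall>x. \<bar>rI x\<bar> \<le> B"
    "\<forall>A\<in>sets Mw. Im (Lam (pA A)) = (\<integral>x. indicator A x * rI x \<partial>Mw)"
  proof -
    have "\<exists>r\<in>borel_measurable Mw. (\<forall>x. \<bar>r x\<bar> \<le> B) \<and>
        (\<forall>A\<in>sets Mw. Im (Lam (pA A)) = (\<integral>x. indicator A x * r x \<partial>Mw))"
    proof (rule RN_bounded[OF fin B])
      fix A assume "A \<in> sets Mw"
      then show "\<bar>Im (Lam (pA A))\<bar> \<le> B * measure Mw A"
        using pA_bd[of A] abs_Im_le_cmod[of "Lam (pA A)"] by simp
    next
      fix A C assume "A \<in> sets Mw" "C \<in> sets Mw" "A \<inter> C = {}"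
      then show "Im (Lam (pA (A \<union> C))) = Im (Lam (pA A)) + Im (Lam (pA C))"
        using pA_add by simp
    qed
    then show ?thesis using that by blast
  qed
  define h where "h t = complex_of_real (rR t) + \<i> * complex_of_real (rI t)" for t
  have rRm[measurable]: "rR \<in> borel_measurable borel" using rR(1) by simp
  have rIm[measurable]: "rI \<in> borel_measurable borel" using rI(1) by simp
  have hm: "h \<in> borel_measurable borel" unfolding h_def[abs_def] by measurable
  have hb: "norm (h t) \<le> 2*B" for t
  proof -
    have "norm (h t) \<le> norm (complex_of_real (rR t)) + norm (\<i> * complex_of_real (rI t))"
      unfolding h_def by (rule norm_triangle_ineq)
    also have "\<dots> \<le> 2 * B" using rR(2) rI(2) by (simp add: norm_mult) (smt (verit))
    finally show ?thesis .
  qed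
  have hA: "Lam (pA A) = (\<integral>t. indicator A t *\<^sub>R h t \<partial>Mw)" if A: "A \<in> sets borel" for A
  proof -
    have iR: "integrable Mw (\<lambda>x. indicator A x * rR x)"
      using A rR(2) by (intro integrable_const_bound[where B=B]) (auto simp: indicator_def)
    have iI: "integrable Mw (\<lambda>x. indicator A x * rI x)"
      using A rI(2) by (intro integrable_const_bound[where B=B]) (auto simp: indicator_def)
    have "(\<integral>t. indicator A t *\<^sub>R h t \<partial>Mw) =
        (\<integral>t. complex_of_real (indicator A t * rR t) + \<i> * complex_of_real (indicator A t * rI t) \<partial>Mw)"
      by (intro Bochner_Integration.integral_cong) (auto simp: h_def indicator_def)
    also have "\<dots> = complex_of_real (\<integral>t. indicator A t * rR t \<partial>Mw) + \<i> * complex_of_real (\<integral>t. indicator A t * rI t \<partial>Mw)"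
    proof -
      have i1: "integrable Mw (\<lambda>t. complex_of_real (indicator A t * rR t))"
        using iR by (simp only: complex_of_real_integrable_eq)
      have i2: "integrable Mw (\<lambda>t. \<i> * complex_of_real (indicator A t * rI t))"
        using iI by (intro integrable_mult_right) (simp only: complex_of_real_integrable_eq)
      show ?thesis
        by (simp only: Bochner_Integration.integral_add[OF i1 i2] integral_mult_right_zero integral_complex_of_real)
    qed
    also have "\<dots> = Lam (pA A)" using rR(3) rI(3) A by (simp add: complex_eq_iff)
    finally show ?thesis by simp
  qed
  show ?thesis using hm hb hA by blast
qed

end


lemma meas_Mw_iff[simp]: "(q \<in> borel_measurable Mw) = (q \<in> borel_measurable borel)"
  by (simp only: measurable_cong_sets[OF sets_Mw refl])

lemma intMw_lborel:
  fixes q :: "real \<Rightarrow> complex"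
  assumes "integrable Mw q" shows "integrable lborel (\<lambda>t. W t *\<^sub>R q t)"
proof -
  have "q \<in> borel_measurable borel" using borel_measurable_integrable[OF assms] by simp
  then show ?thesis using assms integrable_Mw by blast
qed

context wsctx
begin

lemma Lam_rep:
  assumes hm[measurable]: "h \<in> borel_measurable borel" and hb: "\<forall>t. norm (h t) \<le> 2*B"
    and hA: "\<forall>A\<in>sets borel. Lam (pA A) = (\<integral>t. indicator A t *\<^sub>R h t \<partial>Mw)"
    and q: "integrable Mw q"
  shows "Lam (\<lambda>t. W t *\<^sub>R q t) = (\<integral>t. q t * h t \<partial>Mw)"
  using q
proof (induct rule: integrable_induct)
  case (base A c)
  then have A: "A \<in> sets borel" by simp
  have "(\<lambda>t. W t *\<^sub>R (indicator A t *\<^sub>R c)) = (\<lambda>t. c * pA A t)"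
    by (auto simp: fun_eq_iff pA_def indicator_def scaleR_conv_of_real)
  then have "Lam (\<lambda>t. W t *\<^sub>R (indicator A t *\<^sub>R c)) = c * Lam (pA A)"
    using Lam_cmult[OF pA_int[OF A]] by simp
  also have "\<dots> = c * (\<integral>t. indicator A t *\<^sub>R h t \<partial>Mw)" using hA A by simp
  also have "\<dots> = (\<integral>t. c * (indicator A t *\<^sub>R h t) \<partial>Mw)" by (rule integral_mult_right_zero[symmetric])
  also have "\<dots> = (\<integral>t. (indicator A t *\<^sub>R c) * h t \<partial>Mw)"
    by (intro Bochner_Integration.integral_cong) (auto simp: indicator_def)
  finally show ?case .
next
  case (add f1 f2)
  have hbA: "AE t in Mw. norm (h t) \<le> 2*B" using hb by simp
  have B2: "0 \<le> 2*B" using B by simp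
  have i1: "integrable Mw (\<lambda>t. h t * f1 t)" by (rule int_bdd_mult(1)[OF add(1) _ hbA B2]) simp
  have i2: "integrable Mw (\<lambda>t. h t * f2 t)" by (rule int_bdd_mult(1)[OF add(3) _ hbA B2]) simp
  have "Lam (\<lambda>t. W t *\<^sub>R (f1 t + f2 t)) = Lam (\<lambda>t. W t *\<^sub>R f1 t + W t *\<^sub>R f2 t)"
    by (simp add: scaleR_right_distrib)
  also have "\<dots> = Lam (\<lambda>t. W t *\<^sub>R f1 t) + Lam (\<lambda>t. W t *\<^sub>R f2 t)"
    by (rule Lam_add[OF intMw_lborel[OF add(1)] intMw_lborel[OF add(3)]])
  also have "\<dots> = (\<integral>t. h t * f1 t \<partial>Mw) + (\<integral>t. h t * f2 t \<partial>Mw)"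
    using add(2,4) by (simp add: mult.commute)
  also have "\<dots> = (\<integral>t. h t * f1 t + h t * f2 t \<partial>Mw)"
    using i1 i2 by simp
  also have "\<dots> = (\<integral>t. (f1 t + f2 t) * h t \<partial>Mw)"
    by (intro Bochner_Integration.integral_cong) (auto simp: algebra_simps)
  finally show ?case .
next
  case (lim f s)
  have fm[measurable]: "f \<in> borel_measurable borel" using borel_measurable_integrable[OF lim(5)] by simp
  have sm[measurable]: "s i \<in> borel_measurable borel" for i using borel_measurable_integrable[OF lim(1)] by simp
  have c1: "(\<lambda>i. \<integral>t. s i t * h t \<partial>Mw) \<longlonglongrightarrow> (\<integral>t. f t * h t \<partial>Mw)"
  proof (rule integral_dominated_convergence[where w="\<lambda>x. 2 * norm (f x) * (2*B)"])
    show "integrable Mw (\<lambda>x. 2 * norm (f x) * (2*B))" using lim(5) by simp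
    show "AE x in Mw. (\<lambda>i. s i x * h x) \<longlonglongrightarrow> f x * h x"
      using lim(3) by (auto intro!: tendsto_mult_right)
    show "AE x in Mw. norm (s i x * h x) \<le> 2 * norm (f x) * (2*B)" for i
    proof (intro AE_I2)
      fix x
      have "norm (s i x) * norm (h x) \<le> (2 * norm (f x)) * (2*B)"
        using lim(4)[of x i] hb B by (intro mult_mono) auto
      then show "norm (s i x * h x) \<le> 2 * norm (f x) * (2*B)" by (simp add: norm_mult)
    qed
  qed simp_all
  have d0: "(\<lambda>i. \<integral>t. norm (s i t - f t) \<partial>Mw) \<longlonglongrightarrow> (\<integral>t. 0 \<partial>Mw)"
  proof (rule integral_dominated_convergence[where w="\<lambda>x. 3 * norm (f x)"])
    show "integrable Mw (\<lambda>x. 3 * norm (f x))" using lim(5) by simp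
    show "AE x in Mw. (\<lambda>i. norm (s i x - f x)) \<longlonglongrightarrow> 0"
      using lim(3) by (auto intro!: tendsto_norm_zero simp: LIM_zero_iff)
    show "AE x in Mw. norm (norm (s i x - f x)) \<le> 3 * norm (f x)" for i
    proof (intro AE_I2)
      fix x
      have "norm (s i x - f x) \<le> norm (s i x) + norm (f x)" by (rule norm_triangle_ineq4)
      then show "norm (norm (s i x - f x)) \<le> 3 * norm (f x)" using lim(4)[of x i] by simp
    qed
  qed simp_all
  have c2: "(\<lambda>i. Lam (\<lambda>t. W t *\<^sub>R s i t)) \<longlonglongrightarrow> Lam (\<lambda>t. W t *\<^sub>R f t)"
  proof -
    have "(\<lambda>i. Lam (\<lambda>t. W t *\<^sub>R s i t) - Lam (\<lambda>t. W t *\<^sub>R f t)) \<longlonglongrightarrow> 0"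
    proof (rule Lim_null_comparison)
      show "(\<lambda>i. B * (\<integral>t. norm (s i t - f t) \<partial>Mw)) \<longlonglongrightarrow> 0"
        using tendsto_mult[OF tendsto_const[of B] d0] by simp
      show "\<forall>\<^sub>F i in sequentially. norm (Lam (\<lambda>t. W t *\<^sub>R s i t) - Lam (\<lambda>t. W t *\<^sub>R f t))
          \<le> B * (\<integral>t. norm (s i t - f t) \<partial>Mw)"
      proof (intro always_eventually allI)
        fix i
        have "Lam (\<lambda>t. W t *\<^sub>R s i t) - Lam (\<lambda>t. W t *\<^sub>R f t) = Lam (\<lambda>t. W t *\<^sub>R s i t - W t *\<^sub>R f t)"
          by (rule Lam_diff[OF intMw_lborel[OF lim(1)] intMw_lborel[OF lim(5)], symmetric])
        also have "norm \<dots> \<le> B * (\<integral>t. norm (W t *\<^sub>R s i t - W t *\<^sub>R f t) \<partial>lborel)"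
          by (rule Lam_bd) (intro Bochner_Integration.integrable_diff intMw_lborel lim)
        also have "(\<integral>t. norm (W t *\<^sub>R s i t - W t *\<^sub>R f t) \<partial>lborel) = (\<integral>t. W t *\<^sub>R norm (s i t - f t) \<partial>lborel)"
          by (intro Bochner_Integration.integral_cong) (auto simp: scaleR_diff_right[symmetric])
        also have "\<dots> = (\<integral>t. norm (s i t - f t) \<partial>Mw)"
          by (rule integral_Mw[symmetric]) measurable
        finally show "norm (Lam (\<lambda>t. W t *\<^sub>R s i t) - Lam (\<lambda>t. W t *\<^sub>R f t))
          \<le> B * (\<integral>t. norm (s i t - f t) \<partial>Mw)" .
      qed
    qed
    then show ?thesis by (simp add: LIM_zero_iff)
  qed
  have "(\<lambda>i. Lam (\<lambda>t. W t *\<^sub>R s i t)) \<longlonglongrightarrow> (\<integral>t. f t * h t \<partial>Mw)"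
    using c1 lim(2) by simp
  then show ?case using c2 LIMSEQ_unique by blast
qed

lemma weakstar_exists: "\<exists>h. weakstar_shift_lim F g h"
proof -
  obtain h where hm[measurable]: "h \<in> borel_measurable borel" and hb: "\<forall>t. norm (h t) \<le> 2*B"
    and hA: "\<forall>A\<in>sets borel. Lam (pA A) = (\<integral>t. indicator A t *\<^sub>R h t \<partial>Mw)"
    using exists_h by blast
  have "weakstar_shift_lim F g h"
    unfolding weakstar_shift_lim_def
  proof (intro conjI allI impI)
    show "Linf_Rplus h"
      unfolding Linf_Rplus_def set_borel_measurable_def using hb by (auto intro!: exI[of _ "2*B"])
  next
    fix \<psi> assume "L1_Rplus \<psi>"
    then have \<psi>i: "integrable lborel (\<lambda>t. indicator {0..} t *\<^sub>R \<psi> t)"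
      unfolding L1_Rplus_def set_integrable_def .
    define \<psi>b where "\<psi>b t = indicator {0..} t *\<^sub>R \<psi> t" for t
    have \<psi>bm[measurable]: "\<psi>b \<in> borel_measurable borel" using borel_measurable_integrable[OF \<psi>i]
      unfolding \<psi>b_def[abs_def] by simp
    define q where "q t = complex_of_real (exp t) * \<psi>b t" for t
    have qm[measurable]: "q \<in> borel_measurable borel" unfolding q_def[abs_def] by measurable
    have Wq: "W t *\<^sub>R q t = \<psi>b t" for t
      by (auto simp: W_def q_def \<psi>b_def indicator_def scaleR_conv_of_real exp_minus field_simps)
    have qi: "integrable Mw q" using \<psi>i unfolding integrable_Mw[OF qm] Wq \<psi>b_def .
    have lam: "Lam \<psi>b = (LINT t:{0..}|lborel. h t * \<psi> t)"
    proof -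
      have "Lam \<psi>b = Lam (\<lambda>t. W t *\<^sub>R q t)" unfolding Wq by simp
      also have "\<dots> = (\<integral>t. q t * h t \<partial>Mw)" by (rule Lam_rep[OF hm hb hA qi])
      also have "\<dots> = (\<integral>t. W t *\<^sub>R (q t * h t) \<partial>lborel)" by (rule integral_Mw) measurable
      also have "\<dots> = (LINT t:{0..}|lborel. h t * \<psi> t)"
        unfolding set_lebesgue_integral_def
      proof (intro Bochner_Integration.integral_cong refl)
        fix t
        have "W t *\<^sub>R (q t * h t) = (W t *\<^sub>R q t) * h t" by (simp add: scaleR_conv_of_real)
        then show "W t *\<^sub>R (q t * h t) = indicator {0..} t *\<^sub>R (h t * \<psi> t)"
          unfolding Wq by (simp add: \<psi>b_def indicator_def)
      qed
      finally show ?thesis .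
    qed
    have "((\<lambda>s. Jp s \<psi>b) \<longlongrightarrow> Lam \<psi>b) F" using Lam_lim[OF \<psi>i] by (simp add: \<psi>b_def[abs_def])
    moreover have "eventually (\<lambda>s. Jp s \<psi>b = (LINT t:{0..}|lborel. g (t + s) * \<psi> t)) F"
      using pos
    proof eventually_elim
      case (elim s)
      show ?case unfolding Jp_def set_lebesgue_integral_def
        by (intro Bochner_Integration.integral_cong) (use elim in \<open>auto simp: gb_def \<psi>b_def indicator_def\<close>)
    qed
    ultimately show "((\<lambda>s. LINT t:{0..}|lborel. g (t + s) * \<psi> t) \<longlongrightarrow> (LINT t:{0..}|lborel. h t * \<psi> t)) F"
      using lam by (simp add: tendsto_cong)
  qed
  then show ?thesis by blast
qed

end


lemma borel_measurable_cnj'[measurable]: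
  fixes f :: "'a \<Rightarrow> complex"
  assumes "f \<in> borel_measurable M" shows "(\<lambda>x. cnj (f x)) \<in> borel_measurable M"
  using measurable_compose[OF assms borel_measurable_continuous_onI[OF continuous_on_cnj[OF continuous_on_id]]]
  by (simp add: o_def)

lemma Linf_meas:
  assumes "Linf_Rplus h" shows "(\<lambda>t. indicator {0..} t *\<^sub>R h t) \<in> borel_measurable borel"
  using assms unfolding Linf_Rplus_def set_borel_measurable_def by simp

lemma Linf_bdd:
  assumes "Linf_Rplus h"
  obtains C where "0 \<le> C" "AE t in lborel. norm (indicator {0..} t *\<^sub>R h t) \<le> C"
proof -
  obtain C0 where "AE t in lborel. t \<in> {0..} \<longrightarrow> norm (h t) \<le> C0"
    using assms unfolding Linf_Rplus_def by blast
  then have "AE t in lborel. norm (indicator {0..} t *\<^sub>R h t) \<le> max C0 0"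
    by eventually_elim (auto simp: indicator_def)
  then show ?thesis using that[of "max C0 0"] by simp
qed

lemma weakstar_exists_global:
  assumes "ultrafilter F" "eventually (\<lambda>s. 0 \<le> s) F" "Linf_Rplus g"
  shows "\<exists>h. weakstar_shift_lim F g h"
proof -
  obtain C where C: "0 \<le> C" "AE t in lborel. norm (indicator {0..} t *\<^sub>R g t) \<le> C"
    using Linf_bdd[OF assms(3)] by blast
  interpret wsctx g F C
    using assms(1,2) Linf_meas[OF assms(3)] C by unfold_locales auto
  show ?thesis by (rule weakstar_exists)
qed

lemma test_zero:
  fixes q :: "real \<Rightarrow> real"
  assumes qm: "q \<in> borel_measurable borel" and q0: "\<And>t. 0 \<le> q t"
    and qi: "integrable lborel (\<lambda>t. q t * W t)" and le: "(\<integral>t. q t * W t \<partial>lborel) \<le> 0"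
  shows "AE t in lborel. 0 \<le> t \<longrightarrow> q t = 0"
proof -
  have "(\<integral>t. q t * W t \<partial>lborel) = 0"
    using le integral_nonneg_AE[of "\<lambda>t. q t * W t" lborel] q0 by (auto intro!: antisym)
  then have "AE t in lborel. q t * W t = 0"
    using integral_nonneg_eq_0_iff_AE[OF qi] q0 by auto
  then show ?thesis
    by eventually_elim (auto simp: W_def)
qed

lemma L1_bdd_W:
  fixes G :: "real \<Rightarrow> complex"
  assumes "G \<in> borel_measurable borel" "AE t in lborel. norm (G t) \<le> C" "0 \<le> C"
  shows "L1_Rplus (\<lambda>t. G t * complex_of_real (W t))"
proof -
  have Wi: "integrable lborel (\<lambda>t. complex_of_real (W t))"
    using W_int by (simp only: complex_of_real_integrable_eq)
  have "integrable lborel (\<lambda>t. G t * complex_of_real (W t))"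
    by (rule int_bdd_mult(1)[OF Wi _ assms(2,3)]) (use assms(1) in simp)
  then have "integrable lborel (\<lambda>t. indicator {0..} t *\<^sub>R (G t * complex_of_real (W t)))"
    by (rule Bochner_Integration.integrable_cong[THEN iffD1, rotated 2]) (auto simp: W_def indicator_def)
  then show ?thesis unfolding L1_Rplus_def set_integrable_def .
qed

lemma ws_unique:
  fixes h1 h2 :: "real \<Rightarrow> complex"
  assumes F: "F \<noteq> bot" and h1: "Linf_Rplus h1" and h2: "Linf_Rplus h2"
    and lim: "\<And>\<psi>. L1_Rplus \<psi> \<Longrightarrow> (Q \<psi> \<longlongrightarrow> (LINT t:{0..}|lborel. h1 t * \<psi> t)) F \<and>
                                    (Q \<psi> \<longlongrightarrow> (LINT t:{0..}|lborel. h2 t * \<psi> t)) F"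
  shows "AE t in lborel. t \<in> {0..} \<longrightarrow> h1 t = h2 t"
proof -
  define D where "D t = indicator {0..} t *\<^sub>R h1 t - indicator {0..} t *\<^sub>R h2 t" for t
  have Dm[measurable]: "D \<in> borel_measurable borel"
    unfolding D_def[abs_def] using Linf_meas[OF h1] Linf_meas[OF h2] by measurable
  obtain C1 where C1: "0 \<le> C1" "AE t in lborel. norm (indicator {0..} t *\<^sub>R h1 t) \<le> C1"
    using Linf_bdd[OF h1] by blast
  obtain C2 where C2: "0 \<le> C2" "AE t in lborel. norm (indicator {0..} t *\<^sub>R h2 t) \<le> C2"
    using Linf_bdd[OF h2] by blast
  have Db: "AE t in lborel. norm (D t) \<le> C1 + C2"
    using C1(2) C2(2) by eventually_elim (auto simp: D_def intro: order_trans[OF norm_triangle_ineq4])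
  have Dcb: "AE t in lborel. norm (cnj (D t)) \<le> C1 + C2" using Db by simp
  define \<psi> where "\<psi> t = cnj (D t) * complex_of_real (W t)" for t
  have \<psi>L: "L1_Rplus \<psi>" unfolding \<psi>_def[abs_def]
    by (rule L1_bdd_W[OF _ Dcb]) (use C1 C2 in auto)
  have eq: "(LINT t:{0..}|lborel. h1 t * \<psi> t) = (LINT t:{0..}|lborel. h2 t * \<psi> t)"
    using lim[OF \<psi>L] F by (auto intro: tendsto_unique)
  have \<psi>i: "integrable lborel \<psi>"
  proof -
    have Wi: "integrable lborel (\<lambda>t. complex_of_real (W t))"
      using W_int by (simp only: complex_of_real_integrable_eq)
    show ?thesis unfolding \<psi>_def[abs_def]
      by (rule int_bdd_mult(1)[OF Wi _ Dcb]) (use C1 C2 in auto)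
  qed
  have i1: "integrable lborel (\<lambda>t. (indicator {0..} t *\<^sub>R h1 t) * \<psi> t)"
    by (rule int_bdd_mult(1)[OF \<psi>i _ C1(2) C1(1)]) (use Linf_meas[OF h1] in measurable)
  have i2: "integrable lborel (\<lambda>t. (indicator {0..} t *\<^sub>R h2 t) * \<psi> t)"
    by (rule int_bdd_mult(1)[OF \<psi>i _ C2(2) C2(1)]) (use Linf_meas[OF h2] in measurable)
  have pw: "(indicator {0..} t *\<^sub>R h1 t) * \<psi> t - (indicator {0..} t *\<^sub>R h2 t) * \<psi> t
      = complex_of_real ((norm (D t))\<^sup>2 * W t)" for t
  proof -
    have "(indicator {0..} t *\<^sub>R h1 t) * \<psi> t - (indicator {0..} t *\<^sub>R h2 t) * \<psi> t = D t * \<psi> t"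
      by (simp add: D_def algebra_simps)
    also have "\<dots> = (D t * cnj (D t)) * complex_of_real (W t)" by (simp add: \<psi>_def mult.assoc)
    also have "\<dots> = complex_of_real ((norm (D t))\<^sup>2 * W t)"
      by (simp only: complex_norm_square[symmetric] of_real_mult)
    finally show ?thesis .
  qed
  have qWi: "integrable lborel (\<lambda>t. (norm (D t))\<^sup>2 * W t)"
  proof -
    have "integrable lborel (\<lambda>t. (indicator {0..} t *\<^sub>R h1 t) * \<psi> t - (indicator {0..} t *\<^sub>R h2 t) * \<psi> t)"
      using i1 i2 by (rule Bochner_Integration.integrable_diff)
    then have "integrable lborel (\<lambda>t. complex_of_real ((norm (D t))\<^sup>2 * W t))" unfolding pw .
    then show ?thesis by (simp only: complex_of_real_integrable_eq)
  qed
  have "(LINT t:{0..}|lborel. h1 t * \<psi> t) - (LINT t:{0..}|lborel. h2 t * \<psi> t)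
      = (\<integral>t. (indicator {0..} t *\<^sub>R h1 t) * \<psi> t - (indicator {0..} t *\<^sub>R h2 t) * \<psi> t \<partial>lborel)"
    unfolding set_lebesgue_integral_def using i1 i2
    by (subst Bochner_Integration.integral_diff) (simp_all add: mult.assoc)
  also have "\<dots> = complex_of_real (\<integral>t. (norm (D t))\<^sup>2 * W t \<partial>lborel)"
    unfolding pw by (rule integral_complex_of_real)
  finally have "(\<integral>t. (norm (D t))\<^sup>2 * W t \<partial>lborel) = 0" using eq by simp
  then have "AE t in lborel. 0 \<le> t \<longrightarrow> (norm (D t))\<^sup>2 = 0"
    by (intro test_zero qWi) auto
  then show ?thesis by eventually_elim (auto simp: D_def)
qed


lemma ws_bound:
  fixes g h :: "real \<Rightarrow> complex"
  assumes ws: "weakstar_shift_lim F g h" and F: "F \<noteq> bot" and pos: "eventually (\<lambda>s. 0 \<le> s) F"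
    and gm[measurable]: "(\<lambda>t. indicator {0..} t *\<^sub>R g t) \<in> borel_measurable borel"
    and gB: "AE t in lborel. norm (indicator {0..} t *\<^sub>R g t) \<le> B" and B: "0 \<le> B"
  shows "AE t in lborel. norm (indicator {0..} t *\<^sub>R h t) \<le> B"
proof -
  have hL: "Linf_Rplus h" using ws unfolding weakstar_shift_lim_def by blast
  define hb where "hb t = indicator {0..} t *\<^sub>R h t" for t
  have hbm[measurable]: "hb \<in> borel_measurable borel" unfolding hb_def[abs_def] by (rule Linf_meas[OF hL])
  obtain C where C: "0 \<le> C" "AE t in lborel. norm (hb t) \<le> C"
    using Linf_bdd[OF hL] unfolding hb_def by blast
  define gb where "gb t = indicator {0..} t *\<^sub>R g t" for t
  have gbm[measurable]: "gb \<in> borel_measurable borel" unfolding gb_def[abs_def] by (rule gm)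
  have step1: "norm (LINT t:{0..}|lborel. h t * \<psi> t) \<le> B * (\<integral>t. norm (indicator {0..} t *\<^sub>R \<psi> t) \<partial>lborel)"
    if \<psi>: "L1_Rplus \<psi>" for \<psi>
  proof -
    have \<psi>i: "integrable lborel (\<lambda>t. indicator {0..} t *\<^sub>R \<psi> t)"
      using \<psi> unfolding L1_Rplus_def set_integrable_def .
    have lim: "((\<lambda>s. LINT t:{0..}|lborel. g (t + s) * \<psi> t) \<longlongrightarrow> (LINT t:{0..}|lborel. h t * \<psi> t)) F"
      using ws \<psi> unfolding weakstar_shift_lim_def by blast
    have "eventually (\<lambda>s. norm (LINT t:{0..}|lborel. g (t + s) * \<psi> t)
        \<le> B * (\<integral>t. norm (indicator {0..} t *\<^sub>R \<psi> t) \<partial>lborel)) F"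
      using pos
    proof eventually_elim
      case (elim s)
      have "(LINT t:{0..}|lborel. g (t + s) * \<psi> t) = (\<integral>t. gb (t + s) * (indicator {0..} t *\<^sub>R \<psi> t) \<partial>lborel)"
        unfolding set_lebesgue_integral_def
        by (intro Bochner_Integration.integral_cong) (use elim in \<open>auto simp: gb_def indicator_def\<close>)
      also have "norm \<dots> \<le> B * (\<integral>t. norm (indicator {0..} t *\<^sub>R \<psi> t) \<partial>lborel)"
        by (rule int_bdd_mult(2)[OF \<psi>i _ AE_lborel_shift[OF gB[folded gb_def]] B]) measurable
      finally show ?case .
    qed
    then show ?thesis
      using tendsto_upperbound[OF tendsto_norm[OF lim] _ F] by simp
  qed
  define A where "A = {t. 0 \<le> t \<and> B < norm (hb t)}"
  have Am[measurable]: "A \<in> sets borel" unfolding A_def by measurable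
  define u where "u t = (if t \<in> A then cnj (hb t) / complex_of_real (norm (hb t)) else 0)" for t
  have um[measurable]: "u \<in> borel_measurable borel" unfolding u_def[abs_def] by measurable
  have ub: "norm (u t) \<le> 1" for t by (auto simp: u_def norm_divide)
  have L1: "L1_Rplus (\<lambda>t. u t * complex_of_real (W t))"
    by (rule L1_bdd_W[of _ 1]) (use ub in auto)
  have pw1: "indicator {0..} t *\<^sub>R (h t * (u t * complex_of_real (W t)))
      = complex_of_real (indicator A t * norm (hb t) * W t)" for t
  proof (cases "t \<in> A")
    case True
    then have t0: "0 \<le> t" and nz: "hb t \<noteq> 0" using B by (auto simp: A_def)
    have "hb t * cnj (hb t) = complex_of_real (norm (hb t) * norm (hb t))"
      using complex_norm_square[of "hb t"] by (simp add: power2_eq_square)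
    then have "hb t * (cnj (hb t) / complex_of_real (norm (hb t))) = complex_of_real (norm (hb t))"
      using nz by (simp add: field_simps)
    moreover have "h t * (u t * complex_of_real (W t)) = (hb t * (cnj (hb t) / complex_of_real (norm (hb t)))) * complex_of_real (W t)"
      using True t0 by (simp add: u_def hb_def)
    ultimately show ?thesis using True t0 by (simp add: indicator_def)
  next
    case False then show ?thesis by (simp add: u_def)
  qed
  have pw2: "norm (indicator {0..} t *\<^sub>R (u t * complex_of_real (W t))) = indicator A t * W t" for t
  proof (cases "t \<in> A")
    case True
    then have "hb t \<noteq> 0" using B by (auto simp: A_def)
    then show ?thesis using True by (simp add: u_def A_def norm_mult norm_divide indicator_def)
  next
    case False then show ?thesis by (simp add: u_def)
  qed
  have s1: "norm (LINT t:{0..}|lborel. h t * (u t * complex_of_real (W t)))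
      \<le> B * (\<integral>t. indicator A t * W t \<partial>lborel)"
    using step1[OF L1] unfolding pw2 .
  have "(LINT t:{0..}|lborel. h t * (u t * complex_of_real (W t)))
      = complex_of_real (\<integral>t. indicator A t * norm (hb t) * W t \<partial>lborel)"
    unfolding set_lebesgue_integral_def pw1 by (rule integral_complex_of_real)
  then have s2: "\<bar>\<integral>t. indicator A t * norm (hb t) * W t \<partial>lborel\<bar> \<le> B * (\<integral>t. indicator A t * W t \<partial>lborel)"
    using s1 by simp
  have iAW: "integrable lborel (\<lambda>t. indicator A t * W t)"
    by (rule Bochner_Integration.integrable_bound[OF W_int]) (auto simp: indicator_def)
  have iAhW: "integrable lborel (\<lambda>t. indicator A t * norm (hb t) * W t)"
  proof (rule Bochner_Integration.integrable_bound[of _ "\<lambda>t. C * W t"])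
    show "integrable lborel (\<lambda>t. C * W t)" using W_int by simp
    show "(\<lambda>t. indicator A t * norm (hb t) * W t) \<in> borel_measurable lborel" by measurable
    show "AE t in lborel. norm (indicator A t * norm (hb t) * W t) \<le> norm (C * W t)"
      using C(2) by eventually_elim (use C(1) in \<open>auto simp: indicator_def abs_mult intro!: mult_right_mono\<close>)
  qed
  define q where "q t = indicator A t * (norm (hb t) - B)" for t
  have "AE t in lborel. 0 \<le> t \<longrightarrow> q t = 0"
  proof (rule test_zero)
    show "q \<in> borel_measurable borel" unfolding q_def[abs_def] by measurable
    show "0 \<le> q t" for t by (auto simp: q_def A_def indicator_def)
    have eq: "(\<lambda>t. q t * W t) = (\<lambda>t. indicator A t * norm (hb t) * W t - B * (indicator A t * W t))"
      by (auto simp: q_def fun_eq_iff algebra_simps)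
    show "integrable lborel (\<lambda>t. q t * W t)" unfolding eq using iAhW iAW by simp
    have "(\<integral>t. q t * W t \<partial>lborel) = (\<integral>t. indicator A t * norm (hb t) * W t \<partial>lborel) - B * (\<integral>t. indicator A t * W t \<partial>lborel)"
      unfolding eq using iAhW iAW by simp
    then show "(\<integral>t. q t * W t \<partial>lborel) \<le> 0" using s2 by simp
  qed
  then show ?thesis
  proof eventually_elim
    case (elim t)
    show ?case
    proof (cases "0 \<le> t")
      case True
      then have "q t = 0" using elim by simp
      then have "t \<notin> A" using True by (auto simp: q_def A_def indicator_def)
      then show ?thesis using True by (auto simp: A_def hb_def)
    next
      case False then show ?thesis using B by simp
    qed
  qed
qed


lemma integral_shift:
  fixes F :: "real \<Rightarrow> 'a::{banach, second_countable_topology}"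
  shows "(\<integral>x. F x \<partial>lborel) = (\<integral>x. F (x + c) \<partial>lborel)"
  using lborel_integral_real_affine[of 1 F c] by (simp add: add.commute)

lemma integral_reflect:
  fixes F :: "real \<Rightarrow> 'a::{banach, second_countable_topology}"
  shows "(\<integral>x. F x \<partial>lborel) = (\<integral>x. F (c - x) \<partial>lborel)"
  using lborel_integral_real_affine[of "-1" F c] by simp

lemma integrable_shift:
  fixes F :: "real \<Rightarrow> 'a::{banach, second_countable_topology}"
  shows "integrable lborel F \<Longrightarrow> integrable lborel (\<lambda>x. F (x + c))"
  using lborel_integrable_real_affine[of F 1 c] by (simp add: add.commute)

lemma integrable_reflect:
  fixes F :: "real \<Rightarrow> 'a::{banach, second_countable_topology}"
  shows "integrable lborel F \<Longrightarrow> integrable lborel (\<lambda>x. F (c - x))"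
  using lborel_integrable_real_affine[of F "-1" c] by simp

lemma prod_int:
  fixes a b G :: "real \<Rightarrow> complex"
  assumes a: "integrable lborel a" and b: "integrable lborel b"
    and Gm[measurable]: "G \<in> borel_measurable borel" and Gb: "AE z in lborel. norm (G z) \<le> C" and C: "0 \<le> C"
  shows "integrable (lborel \<Otimes>\<^sub>M lborel) (\<lambda>(y,z). a y * G z * b (y - z))"
proof (rule lborel_pair.Fubini_integrable)
  have am[measurable]: "a \<in> borel_measurable borel" using borel_measurable_integrable[OF a] by simp
  have bm[measurable]: "b \<in> borel_measurable borel" using borel_measurable_integrable[OF b] by simp
  show m: "(\<lambda>(y,z). a y * G z * b (y - z)) \<in> borel_measurable (lborel \<Otimes>\<^sub>M lborel)" by measurable
  have bz: "integrable lborel (\<lambda>z. b (y - z))" for y by (rule integrable_reflect[OF b])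
  show "AE y in lborel. integrable lborel (\<lambda>z. case (y, z) of (y, z) \<Rightarrow> a y * G z * b (y - z))"
  proof (intro AE_I2)
    fix y
    have "integrable lborel (\<lambda>z. G z * b (y - z))" by (rule int_bdd_mult(1)[OF bz[of y] _ Gb C]) simp
    then show "integrable lborel (\<lambda>z. case (y, z) of (y, z) \<Rightarrow> a y * G z * b (y - z))"
      by (simp add: mult.assoc)
  qed
  show "integrable lborel (\<lambda>y. \<integral>z. norm (case (y, z) of (y, z) \<Rightarrow> a y * G z * b (y - z)) \<partial>lborel)"
  proof (rule Bochner_Integration.integrable_bound[of _ "\<lambda>y. (C * (\<integral>x. norm (b x) \<partial>lborel)) * norm (a y)"])
    show "integrable lborel (\<lambda>y. (C * (\<integral>x. norm (b x) \<partial>lborel)) * norm (a y))" using a by simp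
    show "(\<lambda>y. \<integral>z. norm (case (y, z) of (y, z) \<Rightarrow> a y * G z * b (y - z)) \<partial>lborel) \<in> borel_measurable lborel"
      by measurable
    show "AE y in lborel. norm (\<integral>z. norm (case (y, z) of (y, z) \<Rightarrow> a y * G z * b (y - z)) \<partial>lborel)
        \<le> norm ((C * (\<integral>x. norm (b x) \<partial>lborel)) * norm (a y))"
    proof (intro AE_I2)
      fix y
      have nn: "0 \<le> (\<integral>z. norm (a y * G z * b (y - z)) \<partial>lborel)" by simp
      have "(\<integral>z. norm (a y * G z * b (y - z)) \<partial>lborel) \<le> (\<integral>z. norm (a y) * C * norm (b (y - z)) \<partial>lborel)"
      proof (rule integral_mono_AE')
        show "integrable lborel (\<lambda>z. norm (a y) * C * norm (b (y - z)))"
          using bz[of y] by simp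
        show "AE z in lborel. norm (a y * G z * b (y - z)) \<le> norm (a y) * C * norm (b (y - z))"
          using Gb by eventually_elim (auto simp: norm_mult intro!: mult_right_mono mult_left_mono)
        show "AE z in lborel. 0 \<le> norm (a y) * C * norm (b (y - z))" using C by simp
      qed
      also have "\<dots> = norm (a y) * C * (\<integral>z. norm (b (y - z)) \<partial>lborel)" by simp
      also have "(\<integral>z. norm (b (y - z)) \<partial>lborel) = (\<integral>x. norm (b x) \<partial>lborel)"
        by (rule integral_reflect[symmetric])
      finally show "norm (\<integral>z. norm (case (y, z) of (y, z) \<Rightarrow> a y * G z * b (y - z)) \<partial>lborel)
        \<le> norm ((C * (\<integral>x. norm (b x) \<partial>lborel)) * norm (a y))"
        using nn C by (simp add: abs_mult mult_ac)
    qed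
  qed
qed

lemma fubini_conv:
  fixes a b G :: "real \<Rightarrow> complex"
  assumes a: "integrable lborel a" and b: "integrable lborel b"
    and Gm[measurable]: "G \<in> borel_measurable borel" and Gb: "AE z in lborel. norm (G z) \<le> C" and C: "0 \<le> C"
  shows "(\<integral>y. a y * (\<integral>z. G z * b (y - z) \<partial>lborel) \<partial>lborel)
       = (\<integral>z. G z * (\<integral>y. a y * b (y - z) \<partial>lborel) \<partial>lborel)"
proof -
  have I: "integrable (lborel \<Otimes>\<^sub>M lborel) (case_prod (\<lambda>y z. a y * G z * b (y - z)))"
    using prod_int[OF a b Gm Gb C] by simp
  have "(\<integral>z. (\<integral>y. a y * G z * b (y - z) \<partial>lborel) \<partial>lborel) = (\<integral>y. (\<integral>z. a y * G z * b (y - z) \<partial>lborel) \<partial>lborel)"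
    by (rule lborel_pair.Fubini_integral[OF I])
  moreover have "(\<integral>z. a y * G z * b (y - z) \<partial>lborel) = a y * (\<integral>z. G z * b (y - z) \<partial>lborel)" for y
    by (simp add: mult.assoc)
  moreover have "(\<integral>y. a y * G z * b (y - z) \<partial>lborel) = G z * (\<integral>y. a y * b (y - z) \<partial>lborel)" for z
    by (simp add: mult.commute mult.left_commute)
  ultimately show ?thesis by simp
qed

lemma conv_int:
  fixes a b :: "real \<Rightarrow> complex"
  assumes a: "integrable lborel a" and b: "integrable lborel b"
  shows "integrable lborel (\<lambda>z. \<integral>y. a y * b (y - z) \<partial>lborel)"
proof -
  have "integrable (lborel \<Otimes>\<^sub>M lborel) (case_prod (\<lambda>y z. a y * (\<lambda>_. 1) z * b (y - z)))"
    using prod_int[OF a b, of "\<lambda>_. 1" 1] by simp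
  from lborel_pair.integrable_snd[OF this] show ?thesis by simp
qed


locale mainctx =
  fixes \<phi> f :: "real \<Rightarrow> complex" and \<eta> :: "nat filter" and u :: real
  assumes phi: "L1_Rplus \<phi>" and fL: "Linf_Rplus f" and eta: "free_ultrafilter_nat \<eta>" and u: "u \<in> {0..1}"
begin

definition \<sigma> where "\<sigma> n = u + real n"
definition om where "om M = (if M = 0 then (\<eta>, u) else tau_s (- real M) (\<eta>, u))"
definition Fom where "Fom M = omega_filter (om M)"

lemma eta_U: "ultrafilter \<eta>" using eta unfolding free_ultrafilter_nat_def by blast
lemma eta_ne: "\<eta> \<noteq> bot" using eta_U unfolding ultrafilter_def by blast

lemma ev_ge: "eventually (\<lambda>n. M \<le> n) \<eta>"
proof -
  have "eventually (\<lambda>n. M \<le> n) cofinite"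
    unfolding eventually_cofinite by (simp add: not_le)
  then show ?thesis using eta unfolding free_ultrafilter_nat_def by (auto simp: le_filter_def)
qed

lemma sigma_nonneg: "0 \<le> \<sigma> n" using u by (simp add: \<sigma>_def)

lemma Fom_eq: "\<exists>\<rho>. Fom M = filtermap \<rho> \<eta> \<and> (\<forall>n. 0 \<le> \<rho> n) \<and> (\<forall>n\<ge>M. \<rho> n = \<sigma> n - real M)"
proof (cases "M = 0")
  case True
  then show ?thesis using u
    by (intro exI[of _ \<sigma>]) (auto simp: Fom_def om_def omega_filter_def \<sigma>_def[abs_def])
next
  case False
  define k where "k = \<lfloor>u + - real M\<rfloor>"
  define v where "v = u + - real M - of_int k"
  have v0: "0 \<le> v" unfolding v_def k_def by linarith
  have kM: "- int M \<le> k" unfolding k_def using u by (simp add: le_floor_iff)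
  define \<rho> where "\<rho> n = v + real (nat (int n + k))" for n
  have "Fom M = filtermap \<rho> \<eta>"
    using False unfolding Fom_def om_def tau_s_def omega_filter_def tau_pow_def \<rho>_def[abs_def] v_def k_def
    by (simp add: filtermap_filtermap)
  moreover have "\<forall>n. 0 \<le> \<rho> n" using v0 by (simp add: \<rho>_def)
  moreover have "\<rho> n = \<sigma> n - real M" if "M \<le> n" for n
  proof -
    have "0 \<le> int n + k" using kM that by simp
    then have "real (nat (int n + k)) = real n + of_int k" by simp
    then show ?thesis unfolding \<rho>_def v_def \<sigma>_def by simp
  qed
  ultimately show ?thesis by blast
qed

lemma Fom_ultra: "ultrafilter (Fom M)"
  using Fom_eq[of M] ultrafilter_filtermap[OF eta_U] by auto

lemma Fom_pos: "eventually (\<lambda>s. 0 \<le> s) (Fom M)"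
  using Fom_eq[of M] by (auto simp: eventually_filtermap)

lemma Fom_lim:
  assumes "(Q \<longlongrightarrow> L) (Fom M)"
  shows "((\<lambda>n. Q (\<sigma> n - real M)) \<longlongrightarrow> L) \<eta>"
proof -
  obtain \<rho> where \<rho>: "Fom M = filtermap \<rho> \<eta>" "\<forall>n\<ge>M. \<rho> n = \<sigma> n - real M"
    using Fom_eq[of M] by blast
  have "((\<lambda>n. Q (\<rho> n)) \<longlongrightarrow> L) \<eta>" using assms \<rho>(1) by (simp add: filterlim_filtermap)
  moreover have "eventually (\<lambda>n. Q (\<rho> n) = Q (\<sigma> n - real M)) \<eta>"
    using ev_ge[of M] by eventually_elim (use \<rho>(2) in simp)
  ultimately show ?thesis by (simp add: tendsto_cong)
qed

definition Bf where "Bf = (SOME C. 0 \<le> C \<and> (AE t in lborel. norm (indicator {0..} t *\<^sub>R f t) \<le> C))"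

lemma Bf: "0 \<le> Bf" "AE t in lborel. norm (indicator {0..} t *\<^sub>R f t) \<le> Bf"
proof -
  obtain C where "0 \<le> C" "AE t in lborel. norm (indicator {0..} t *\<^sub>R f t) \<le> C"
    using Linf_bdd[OF fL] by blast
  then have "\<exists>C. 0 \<le> C \<and> (AE t in lborel. norm (indicator {0..} t *\<^sub>R f t) \<le> C)" by blast
  from someI_ex[OF this] show "0 \<le> Bf" "AE t in lborel. norm (indicator {0..} t *\<^sub>R f t) \<le> Bf"
    unfolding Bf_def by auto
qed

definition G where "G M = g_omega f (om M)"

lemma G_ws: "weakstar_shift_lim (Fom M) f (G M)"
proof -
  have "\<exists>h. weakstar_shift_lim (Fom M) f h"
    by (rule weakstar_exists_global[OF Fom_ultra Fom_pos fL])
  from someI_ex[OF this] show ?thesis unfolding G_def g_omega_def Fom_def .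
qed

lemma G_L: "Linf_Rplus (G M)" using G_ws unfolding weakstar_shift_lim_def by blast

definition Gb where "Gb M t = indicator {0..} t *\<^sub>R G M t"

lemma Gb_meas[measurable]: "Gb M \<in> borel_measurable borel"
  unfolding Gb_def[abs_def] by (rule Linf_meas[OF G_L])

lemma Gb_bd: "AE t in lborel. norm (Gb M t) \<le> Bf"
  unfolding Gb_def
  by (rule ws_bound[OF G_ws _ Fom_pos Linf_meas[OF fL] Bf(2) Bf(1)])
     (use Fom_ultra in \<open>simp add: ultrafilter_def\<close>)

definition E where "E = g_omega_ext f (\<eta>, u)"
definition idx where "idx x = (if 0 \<le> x then 0 else nat \<lceil>- x\<rceil>)" for x :: real

lemma idx_props:
  fixes x :: real
  shows "0 \<le> x + real (idx x)" "x < 0 \<Longrightarrow> 1 \<le> idx x" "x < 0 \<Longrightarrow> x + real (idx x) < 1"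
  by (auto simp: idx_def) linarith+

lemma E_idx: "E x = Gb (idx x) (x + real (idx x))"
proof (cases "0 \<le> x")
  case True
  then show ?thesis by (simp add: E_def g_omega_ext_def idx_def Gb_def G_def om_def)
next
  case False
  have c: "\<lceil>- x\<rceil> > 0" using False by simp
  then have r: "real (nat \<lceil>- x\<rceil>) = real_of_int \<lceil>- x\<rceil>" by simp
  have "x + real_of_int \<lceil>- x\<rceil> \<ge> 0" by linarith
  then show ?thesis using False c r
    by (simp add: E_def g_omega_ext_def idx_def Gb_def G_def om_def Let_def add.commute)
qed

lemma idx_iff:
  fixes x :: real
  assumes "x < 0" "1 \<le> M"
  shows "x \<in> {- real M..<- real M + 1} \<longleftrightarrow> M = idx x"
proof
  assume x: "x \<in> {- real M..<- real M + 1}"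
  then have "\<lceil>- x\<rceil> = int M" by (intro ceiling_unique) auto
  then show "M = idx x" using assms by (simp add: idx_def)
next
  assume "M = idx x"
  then have "real M = real_of_int \<lceil>- x\<rceil>" using assms by (simp add: idx_def)
  then show "x \<in> {- real M..<- real M + 1}" by simp linarith
qed

lemma E_meas[measurable]: "E \<in> borel_measurable borel"
proof (rule borel_measurable_LIMSEQ_metric)
  define EK where "EK K x = (if 0 \<le> x then Gb 0 x else
      (\<Sum>M\<in>{1..K}. indicator {- real M..<- real M + 1} x *\<^sub>R Gb M (x + real M)))" for K x
  show "EK K \<in> borel_measurable borel" for K unfolding EK_def[abs_def] by measurable
  show "(\<lambda>K. EK K x) \<longlonglongrightarrow> E x" if "x \<in> space borel" for x
  proof (rule tendsto_eventually)
    show "eventually (\<lambda>K. EK K x = E x) sequentially"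
    proof (cases "0 \<le> x")
      case True then show ?thesis by (simp add: EK_def E_idx idx_def)
    next
      case False
      then have x: "x < 0" by simp
      show ?thesis unfolding eventually_sequentially
      proof (intro exI allI impI)
        fix K assume K: "idx x \<le> K"
        have "(\<Sum>M\<in>{1..K}. indicator {- real M..<- real M + 1} x *\<^sub>R Gb M (x + real M))
            = (\<Sum>M\<in>{1..K}. if M = idx x then Gb M (x + real M) else 0)"
        proof (intro sum.cong refl)
          fix M assume "M \<in> {1..K}"
          then show "indicator {- real M..<- real M + 1} x *\<^sub>R Gb M (x + real M)
              = (if M = idx x then Gb M (x + real M) else 0)"
            using idx_iff[OF x, of M] by (auto simp: indicator_def)
        qed
        also have "\<dots> = Gb (idx x) (x + real (idx x))"
          using K idx_props(2)[OF x] by (simp add: sum.delta)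
        finally show "EK K x = E x" using x by (simp add: EK_def E_idx)
      qed
    qed
  qed
qed

lemma E_bd: "AE x in lborel. norm (E x) \<le> Bf"
proof -
  have "\<forall>M. AE x in lborel. norm (Gb M (x + real M)) \<le> Bf"
    using AE_lborel_shift[OF Gb_bd] by blast
  then have "AE x in lborel. \<forall>M. norm (Gb M (x + real M)) \<le> Bf"
    by (simp add: AE_all_countable)
  then show ?thesis by eventually_elim (simp add: E_idx)
qed

end


context mainctx
begin

definition fb where "fb t = indicator {0..} t *\<^sub>R f t"

lemma fb_meas[measurable]: "fb \<in> borel_measurable borel"
  unfolding fb_def[abs_def] by (rule Linf_meas[OF fL])

lemma fb_shift_bd: "AE t in lborel. norm (fb (t + c)) \<le> Bf"
  using AE_lborel_shift[OF Bf(2)[folded fb_def]] .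

lemma fb_int: "integrable lborel \<Phi> \<Longrightarrow> integrable lborel (\<lambda>z. fb (z + c) * \<Phi> z)"
  by (rule int_bdd_mult(1)[OF _ _ fb_shift_bd Bf(1)]) measurable

lemma E_int: "integrable lborel \<Phi> \<Longrightarrow> integrable lborel (\<lambda>z. E z * \<Phi> z)"
  by (rule int_bdd_mult(1)[OF _ _ E_bd Bf(1)]) measurable

definition Ip where "Ip M = (if M = 0 then {0..} else {- real M..<- real M + 1})"

lemma Ip_sets[measurable]: "Ip M \<in> sets borel" by (simp add: Ip_def)

lemma piece:
  assumes \<Phi>i: "integrable lborel \<Phi>"
  shows "((\<lambda>n. \<integral>z. indicator (Ip M) z *\<^sub>R (fb (z + \<sigma> n) * \<Phi> z) \<partial>lborel)
          \<longlongrightarrow> (\<integral>z. indicator (Ip M) z *\<^sub>R (E z * \<Phi> z) \<partial>lborel)) \<eta>"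
proof (cases "M = 0")
  case True
  have L: "L1_Rplus \<Phi>" unfolding L1_Rplus_def set_integrable_def
    by (rule integrable_mult_indicator[OF _ \<Phi>i]) simp
  have "((\<lambda>s. LINT t:{0..}|lborel. f (t + s) * \<Phi> t) \<longlongrightarrow> (LINT t:{0..}|lborel. G 0 t * \<Phi> t)) (Fom 0)"
    using G_ws[of 0] L unfolding weakstar_shift_lim_def by blast
  from Fom_lim[OF this]
  have lim: "((\<lambda>n. LINT t:{0..}|lborel. f (t + \<sigma> n) * \<Phi> t) \<longlongrightarrow> (LINT t:{0..}|lborel. G 0 t * \<Phi> t)) \<eta>"
    by simp
  have e1: "(\<integral>z. indicator (Ip M) z *\<^sub>R (fb (z + \<sigma> n) * \<Phi> z) \<partial>lborel) = (LINT t:{0..}|lborel. f (t + \<sigma> n) * \<Phi> t)" for n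
    unfolding set_lebesgue_integral_def using True sigma_nonneg[of n]
    by (intro Bochner_Integration.integral_cong) (auto simp: Ip_def fb_def indicator_def)
  have e2: "(\<integral>z. indicator (Ip M) z *\<^sub>R (E z * \<Phi> z) \<partial>lborel) = (LINT t:{0..}|lborel. G 0 t * \<Phi> t)"
    unfolding set_lebesgue_integral_def using True
    by (intro Bochner_Integration.integral_cong) (auto simp: Ip_def E_idx idx_def Gb_def indicator_def)
  show ?thesis unfolding e1 e2 by (rule lim)
next
  case False
  define \<psi> where "\<psi> v = indicator {0..<1} v *\<^sub>R \<Phi> (v - real M)" for v
  have \<psi>i: "integrable lborel \<psi>" unfolding \<psi>_def[abs_def]
    by (rule integrable_mult_indicator) (auto intro: integrable_shift[OF \<Phi>i, of "- real M", simplified])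
  have L: "L1_Rplus \<psi>" unfolding L1_Rplus_def set_integrable_def
    by (rule integrable_mult_indicator[OF _ \<psi>i]) simp
  have "((\<lambda>s. LINT t:{0..}|lborel. f (t + s) * \<psi> t) \<longlongrightarrow> (LINT t:{0..}|lborel. G M t * \<psi> t)) (Fom M)"
    using G_ws[of M] L unfolding weakstar_shift_lim_def by blast
  from Fom_lim[OF this]
  have lim: "((\<lambda>n. LINT t:{0..}|lborel. f (t + (\<sigma> n - real M)) * \<psi> t) \<longlongrightarrow> (LINT t:{0..}|lborel. G M t * \<psi> t)) \<eta>" .
  have e1: "(\<integral>z. indicator (Ip M) z *\<^sub>R (fb (z + \<sigma> n) * \<Phi> z) \<partial>lborel) = (LINT t:{0..}|lborel. f (t + (\<sigma> n - real M)) * \<psi> t)"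
    if n: "M \<le> n" for n
  proof -
    have "(\<integral>z. indicator (Ip M) z *\<^sub>R (fb (z + \<sigma> n) * \<Phi> z) \<partial>lborel)
        = (\<integral>v. indicator (Ip M) (v + - real M) *\<^sub>R (fb ((v + - real M) + \<sigma> n) * \<Phi> (v + - real M)) \<partial>lborel)"
      by (rule integral_shift)
    also have "\<dots> = (LINT t:{0..}|lborel. f (t + (\<sigma> n - real M)) * \<psi> t)"
      unfolding set_lebesgue_integral_def
    proof (intro Bochner_Integration.integral_cong refl)
      fix v
      have "real M \<le> \<sigma> n" using n u by (simp add: \<sigma>_def)
      then show "indicator (Ip M) (v + - real M) *\<^sub>R (fb ((v + - real M) + \<sigma> n) * \<Phi> (v + - real M))
          = indicator {0..} v *\<^sub>R (f (v + (\<sigma> n - real M)) * \<psi> v)"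
        using False by (auto simp: Ip_def fb_def \<psi>_def indicator_def algebra_simps)
    qed
    finally show ?thesis .
  qed
  have e2: "(\<integral>z. indicator (Ip M) z *\<^sub>R (E z * \<Phi> z) \<partial>lborel) = (LINT t:{0..}|lborel. G M t * \<psi> t)"
  proof -
    have "(\<integral>z. indicator (Ip M) z *\<^sub>R (E z * \<Phi> z) \<partial>lborel)
        = (\<integral>v. indicator (Ip M) (v + - real M) *\<^sub>R (E (v + - real M) * \<Phi> (v + - real M)) \<partial>lborel)"
      by (rule integral_shift)
    also have "\<dots> = (LINT t:{0..}|lborel. G M t * \<psi> t)"
      unfolding set_lebesgue_integral_def
    proof (intro Bochner_Integration.integral_cong refl)
      fix v
      show "indicator (Ip M) (v + - real M) *\<^sub>R (E (v + - real M) * \<Phi> (v + - real M))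
          = indicator {0..} v *\<^sub>R (G M v * \<psi> v)"
      proof (cases "v \<in> {0..<1}")
        case True
        have x: "v + - real M < 0" using True False by simp
        have M1: "1 \<le> M" using False by simp
        have "v + - real M \<in> {- real M..<- real M + 1}" using True by simp
        then have "idx (v + - real M) = M" using idx_iff[OF x M1] by simp
        then have "E (v + - real M) = G M v" using True by (simp add: E_idx Gb_def)
        then show ?thesis using True False by (simp add: Ip_def \<psi>_def)
      next
        case False
        then show ?thesis using \<open>M \<noteq> 0\<close> by (auto simp: Ip_def \<psi>_def indicator_def)
      qed
    qed
    finally show ?thesis .
  qed
  have "eventually (\<lambda>n. (LINT t:{0..}|lborel. f (t + (\<sigma> n - real M)) * \<psi> t)
      = (\<integral>z. indicator (Ip M) z *\<^sub>R (fb (z + \<sigma> n) * \<Phi> z) \<partial>lborel)) \<eta>"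
    using ev_ge[of M] by eventually_elim (simp add: e1)
  then show ?thesis unfolding e2 using lim by (simp add: tendsto_cong)
qed

end


lemma tail_lim:
  fixes Bf :: real
  assumes \<Phi>i: "integrable lborel (\<Phi> :: real \<Rightarrow> complex)"
  shows "(\<lambda>K. (Bf::real) * (\<integral>z. norm (indicator {..< - real K} z *\<^sub>R \<Phi> z) \<partial>lborel)) \<longlonglongrightarrow> 0"
proof -
  have "(\<lambda>K. \<integral>z. norm (indicator {..< - real K} z *\<^sub>R \<Phi> z) \<partial>lborel) \<longlonglongrightarrow> (\<integral>z. (0::real) \<partial>(lborel::real measure))"
  proof (rule Bochner_Integration.integral_dominated_convergence[where w="\<lambda>z. norm (\<Phi> z)"
        and s="\<lambda>K z. norm (indicator {..< - real K} z *\<^sub>R \<Phi> z)" and f="\<lambda>z. 0"])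
    show "integrable lborel (\<lambda>z. norm (\<Phi> z))" using \<Phi>i by simp
    show "(\<lambda>z. norm (indicator {..< - real K} z *\<^sub>R \<Phi> z)) \<in> borel_measurable lborel" for K
      using borel_measurable_integrable[OF \<Phi>i] by measurable
    show "AE z in lborel. (\<lambda>K. norm (indicator {..< - real K} z *\<^sub>R \<Phi> z)) \<longlonglongrightarrow> 0"
    proof (intro AE_I2 tendsto_eventually)
      fix z :: real
      obtain N :: nat where "- z < real N" using reals_Archimedean2 by blast
      then show "eventually (\<lambda>K. norm (indicator {..< - real K} z *\<^sub>R \<Phi> z) = 0) sequentially"
        unfolding eventually_sequentially by (intro exI[of _ N]) (auto simp: indicator_def)
    qed
    show "AE z in lborel. norm (norm (indicator {..< - real K} z *\<^sub>R \<Phi> z)) \<le> norm (\<Phi> z)" for K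
      by (auto simp: indicator_def)
  qed simp_all
  then show ?thesis using tendsto_mult[OF tendsto_const[of Bf]] by fastforce
qed

context mainctx
begin

lemma ind_split: "indicator {- real (Suc K)..} z *\<^sub>R (X::complex)
    = indicator {- real K..} z *\<^sub>R X + indicator (Ip (Suc K)) z *\<^sub>R X"
  by (auto simp: Ip_def indicator_def)

lemma ind_tail: "(X::complex) - indicator {- real K..} z *\<^sub>R X = indicator {..< - real K} z *\<^sub>R X"
  by (auto simp: indicator_def)

lemma lemB:
  assumes \<Phi>i: "integrable lborel \<Phi>"
  shows "((\<lambda>n. \<integral>z. fb (z + \<sigma> n) * \<Phi> z \<partial>lborel) \<longlongrightarrow> (\<integral>z. E z * \<Phi> z \<partial>lborel)) \<eta>"
proof -
  have \<Phi>m[measurable]: "\<Phi> \<in> borel_measurable borel" using borel_measurable_integrable[OF \<Phi>i] by simp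
  define PK where "PK K n = (\<integral>z. indicator {- real K..} z *\<^sub>R (fb (z + \<sigma> n) * \<Phi> z) \<partial>lborel)" for K n
  define QK where "QK K = (\<integral>z. indicator {- real K..} z *\<^sub>R (E z * \<Phi> z) \<partial>lborel)" for K
  have fi: "integrable lborel (\<lambda>z. indicator A z *\<^sub>R (fb (z + \<sigma> n) * \<Phi> z))" if "A \<in> sets borel" for A n
    using that by (intro integrable_mult_indicator fb_int \<Phi>i) simp
  have Ei: "integrable lborel (\<lambda>z. indicator A z *\<^sub>R (E z * \<Phi> z))" if "A \<in> sets borel" for A
    using that by (intro integrable_mult_indicator E_int \<Phi>i) simp
  have conv: "((\<lambda>n. PK K n) \<longlongrightarrow> QK K) \<eta>" for K
  proof (induction K)
    case 0
    have "Ip 0 = {- real 0..}" by (simp add: Ip_def)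
    then show ?case using piece[OF \<Phi>i, of 0] unfolding PK_def QK_def by simp
  next
    case (Suc K)
    have p: "PK (Suc K) n = PK K n + (\<integral>z. indicator (Ip (Suc K)) z *\<^sub>R (fb (z + \<sigma> n) * \<Phi> z) \<partial>lborel)" for n
      unfolding PK_def ind_split by (rule Bochner_Integration.integral_add) (intro fi; simp)+
    have q: "QK (Suc K) = QK K + (\<integral>z. indicator (Ip (Suc K)) z *\<^sub>R (E z * \<Phi> z) \<partial>lborel)"
      unfolding QK_def ind_split by (rule Bochner_Integration.integral_add) (intro Ei; simp)+
    show ?case unfolding p q by (intro tendsto_add Suc piece[OF \<Phi>i])
  qed
  define e where "e K = Bf * (\<integral>z. norm (indicator {..< - real K} z *\<^sub>R \<Phi> z) \<partial>lborel)" for K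
  have Ti: "integrable lborel (\<lambda>z. indicator {..< - real K} z *\<^sub>R \<Phi> z)" for K
    by (intro integrable_mult_indicator \<Phi>i) simp
  have ab: "eventually (\<lambda>n. norm ((\<integral>z. fb (z + \<sigma> n) * \<Phi> z \<partial>lborel) - PK K n) \<le> e K) \<eta>" for K
  proof (intro always_eventually allI)
    fix n
    have "(\<integral>z. fb (z + \<sigma> n) * \<Phi> z \<partial>lborel) - PK K n
        = (\<integral>z. fb (z + \<sigma> n) * \<Phi> z - indicator {- real K..} z *\<^sub>R (fb (z + \<sigma> n) * \<Phi> z) \<partial>lborel)"
      unfolding PK_def by (rule Bochner_Integration.integral_diff[symmetric]) (intro fb_int \<Phi>i, intro fi, simp)
    also have "\<dots> = (\<integral>z. fb (z + \<sigma> n) * (indicator {..< - real K} z *\<^sub>R \<Phi> z) \<partial>lborel)"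
      by (intro Bochner_Integration.integral_cong) (auto simp: indicator_def)
    finally show "norm ((\<integral>z. fb (z + \<sigma> n) * \<Phi> z \<partial>lborel) - PK K n) \<le> e K"
      unfolding e_def using int_bdd_mult(2)[OF Ti _ fb_shift_bd Bf(1)] by simp
  qed
  have ac: "norm ((\<integral>z. E z * \<Phi> z \<partial>lborel) - QK K) \<le> e K" for K
  proof -
    have "(\<integral>z. E z * \<Phi> z \<partial>lborel) - QK K
        = (\<integral>z. E z * \<Phi> z - indicator {- real K..} z *\<^sub>R (E z * \<Phi> z) \<partial>lborel)"
      unfolding QK_def by (rule Bochner_Integration.integral_diff[symmetric]) (intro E_int \<Phi>i, intro Ei, simp)
    also have "\<dots> = (\<integral>z. E z * (indicator {..< - real K} z *\<^sub>R \<Phi> z) \<partial>lborel)"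
      by (intro Bochner_Integration.integral_cong) (auto simp: indicator_def)
    finally show ?thesis
      unfolding e_def using int_bdd_mult(2)[OF Ti _ E_bd Bf(1)] by simp
  qed
  show ?thesis
    by (rule tendsto_approx[OF conv ab ac]) (unfold e_def, rule tail_lim[OF \<Phi>i])
qed

end


context mainctx
begin

definition pt where "pt = phi_tilde \<phi>"

lemma pt_eq: "pt = (\<lambda>t. indicator {0..} t *\<^sub>R \<phi> t)"
  by (auto simp: pt_def phi_tilde_def fun_eq_iff indicator_def)

lemma pt_int: "integrable lborel pt"
  using phi unfolding pt_eq L1_Rplus_def set_integrable_def .

lemma pt_meas[measurable]: "pt \<in> borel_measurable borel"
  using borel_measurable_integrable[OF pt_int] by simp

lemma Uf_eq: "Uop \<phi> f x = (\<integral>t. fb t * pt (x - t) \<partial>lborel)"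
  unfolding Uop_def set_lebesgue_integral_def
  by (intro Bochner_Integration.integral_cong) (auto simp: fb_def pt_eq indicator_def)

lemma Uf_shift: "Uop \<phi> f (y + s) = (\<integral>z. fb (z + s) * pt (y - z) \<partial>lborel)"
  unfolding Uf_eq by (subst integral_shift[of _ s]) simp

lemma Uf_meas[measurable]: "Uop \<phi> f \<in> borel_measurable borel"
proof -
  have "(\<lambda>x. \<integral>t. fb t * pt (x - t) \<partial>lborel) \<in> borel_measurable borel" by measurable
  then show ?thesis unfolding Uf_eq[abs_def] .
qed

definition Cphi where "Cphi = Bf * (\<integral>t. norm (pt t) \<partial>lborel)"

lemma Cphi_nonneg: "0 \<le> Cphi" unfolding Cphi_def using Bf(1) by simp

lemma Uf_bd: "norm (Uop \<phi> f x) \<le> Cphi"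
proof -
  have "norm (Uop \<phi> f x) \<le> Bf * (\<integral>t. norm (pt (x - t)) \<partial>lborel)"
    unfolding Uf_eq by (rule int_bdd_mult(2)[OF integrable_reflect[OF pt_int] _ Bf(2)[folded fb_def] Bf(1)]) simp
  also have "(\<integral>t. norm (pt (x - t)) \<partial>lborel) = (\<integral>t. norm (pt t) \<partial>lborel)"
    by (rule integral_reflect[symmetric])
  finally show ?thesis unfolding Cphi_def .
qed

lemma Uf_L: "Linf_Rplus (Uop \<phi> f)"
  unfolding Linf_Rplus_def set_borel_measurable_def using Uf_bd
  by (auto intro!: exI[of _ Cphi])

definition H where "H N y = conv E pt (y - real N)"

lemma H_meas[measurable]: "H N \<in> borel_measurable borel"
proof -
  have "(\<lambda>y. \<integral>t. E (y - real N - t) * pt t \<partial>lborel) \<in> borel_measurable borel" by measurable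
  then show ?thesis unfolding H_def[abs_def] conv_def .
qed

lemma H_bd: "norm (H N y) \<le> Cphi"
proof -
  have ae: "AE t in lborel. norm (E ((y - real N) + (-1) * t)) \<le> Bf"
    by (rule AE_lborel_affine[OF _ E_bd]) simp
  have "norm (H N y) \<le> Bf * (\<integral>t. norm (pt t) \<partial>lborel)"
    unfolding H_def conv_def by (rule int_bdd_mult(2)[OF pt_int _ _ Bf(1)]) (use ae in simp_all)
  then show ?thesis unfolding Cphi_def .
qed

lemma H_L: "Linf_Rplus (H N)"
  unfolding Linf_Rplus_def set_borel_measurable_def using H_bd
  by (auto intro!: exI[of _ Cphi])

end


context mainctx
begin

lemma lemC:
  assumes \<psi>: "L1_Rplus \<psi>"
  shows "((\<lambda>n. LINT y:{0..}|lborel. Uop \<phi> f (y + (\<sigma> n - real N)) * \<psi> y)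
          \<longlongrightarrow> (LINT y:{0..}|lborel. H N y * \<psi> y)) \<eta>"
proof -
  define \<psi>b where "\<psi>b y = indicator {0..} y *\<^sub>R \<psi> y" for y
  have \<psi>bi: "integrable lborel \<psi>b" using \<psi> unfolding \<psi>b_def[abs_def] L1_Rplus_def set_integrable_def .
  define \<Phi> where "\<Phi> z = (\<integral>y. \<psi>b y * pt (y - z) \<partial>lborel)" for z
  have \<Phi>i: "integrable lborel \<Phi>" unfolding \<Phi>_def[abs_def] by (rule conv_int[OF \<psi>bi pt_int])
  have \<Phi>Ni: "integrable lborel (\<lambda>z. \<Phi> (z + real N))" by (rule integrable_shift[OF \<Phi>i])
  have eqn: "(LINT y:{0..}|lborel. Uop \<phi> f (y + (\<sigma> n - real N)) * \<psi> y)
      = (\<integral>z. fb (z + \<sigma> n) * \<Phi> (z + real N) \<partial>lborel)" for n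
  proof -
    define s where "s = \<sigma> n - real N"
    have "(LINT y:{0..}|lborel. Uop \<phi> f (y + s) * \<psi> y)
        = (\<integral>y. \<psi>b y * (\<integral>z. fb (z + s) * pt (y - z) \<partial>lborel) \<partial>lborel)"
      unfolding set_lebesgue_integral_def Uf_shift
      by (intro Bochner_Integration.integral_cong) (auto simp: \<psi>b_def)
    also have "\<dots> = (\<integral>z. fb (z + s) * \<Phi> z \<partial>lborel)"
      unfolding \<Phi>_def by (rule fubini_conv[OF \<psi>bi pt_int _ fb_shift_bd Bf(1)]) simp
    also have "\<dots> = (\<integral>z. fb ((z + real N) + s) * \<Phi> (z + real N) \<partial>lborel)"
      by (rule integral_shift)
    also have "\<dots> = (\<integral>z. fb (z + \<sigma> n) * \<Phi> (z + real N) \<partial>lborel)"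
      unfolding s_def by (simp add: algebra_simps)
    finally show ?thesis unfolding s_def .
  qed
  have lim: "((\<lambda>n. \<integral>z. fb (z + \<sigma> n) * \<Phi> (z + real N) \<partial>lborel)
      \<longlongrightarrow> (\<integral>z. E z * \<Phi> (z + real N) \<partial>lborel)) \<eta>"
    by (rule lemB[OF \<Phi>Ni])
  have "(\<integral>z. E z * \<Phi> (z + real N) \<partial>lborel) = (\<integral>z. E (z + - real N) * \<Phi> z \<partial>lborel)"
    by (subst integral_shift[of _ "- real N"]) simp
  also have "\<dots> = (\<integral>y. \<psi>b y * (\<integral>z. E (z + - real N) * pt (y - z) \<partial>lborel) \<partial>lborel)"
    unfolding \<Phi>_def
    by (rule fubini_conv[OF \<psi>bi pt_int _ AE_lborel_shift[OF E_bd] Bf(1), symmetric]) simp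
  also have "\<dots> = (LINT y:{0..}|lborel. H N y * \<psi> y)"
    unfolding set_lebesgue_integral_def
  proof (intro Bochner_Integration.integral_cong refl)
    fix y
    have "(\<integral>z. E (z + - real N) * pt (y - z) \<partial>lborel) = (\<integral>t. E ((y - t) + - real N) * pt (y - (y - t)) \<partial>lborel)"
      by (rule integral_reflect)
    also have "\<dots> = H N y" unfolding H_def conv_def by (simp add: algebra_simps)
    finally show "\<psi>b y * (\<integral>z. E (z + - real N) * pt (y - z) \<partial>lborel) = indicator {0..} y *\<^sub>R (H N y * \<psi> y)"
      by (simp add: \<psi>b_def indicator_def)
  qed
  finally show ?thesis using lim unfolding eqn by simp
qed

lemma U_eq_H: "AE y in lborel. y \<in> {0..} \<longrightarrow> g_omega (Uop \<phi> f) (om N) y = H N y"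
proof (rule ws_unique[OF eta_ne _ H_L])
  have ex: "\<exists>h. weakstar_shift_lim (Fom N) (Uop \<phi> f) h"
    by (rule weakstar_exists_global[OF Fom_ultra Fom_pos Uf_L])
  have ws: "weakstar_shift_lim (Fom N) (Uop \<phi> f) (g_omega (Uop \<phi> f) (om N))"
    using someI_ex[OF ex] unfolding g_omega_def Fom_def .
  show "Linf_Rplus (g_omega (Uop \<phi> f) (om N))" using ws unfolding weakstar_shift_lim_def by blast
  fix \<psi> assume \<psi>: "L1_Rplus \<psi>"
  have "((\<lambda>s. LINT t:{0..}|lborel. Uop \<phi> f (t + s) * \<psi> t)
      \<longlongrightarrow> (LINT t:{0..}|lborel. g_omega (Uop \<phi> f) (om N) t * \<psi> t)) (Fom N)"
    using ws \<psi> unfolding weakstar_shift_lim_def by blast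
  from Fom_lim[OF this] lemC[OF \<psi>, of N]
  show "((\<lambda>n. LINT t:{0..}|lborel. Uop \<phi> f (t + (\<sigma> n - real N)) * \<psi> t)
      \<longlongrightarrow> (LINT t:{0..}|lborel. g_omega (Uop \<phi> f) (om N) t * \<psi> t)) \<eta> \<and>
      ((\<lambda>n. LINT t:{0..}|lborel. Uop \<phi> f (t + (\<sigma> n - real N)) * \<psi> t)
      \<longlongrightarrow> (LINT t:{0..}|lborel. H N t * \<psi> t)) \<eta>" by blast
qed

lemma ext_idx: "g_omega_ext g (\<eta>, u) x = g_omega g (om (idx x)) (x + real (idx x))"
proof (cases "0 \<le> x")
  case True
  then show ?thesis by (simp add: g_omega_ext_def idx_def om_def)
next
  case False
  have c: "\<lceil>- x\<rceil> > 0" using False by simp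
  then have r: "real (nat \<lceil>- x\<rceil>) = real_of_int \<lceil>- x\<rceil>" by simp
  show ?thesis using False c r
    by (simp add: g_omega_ext_def idx_def om_def Let_def add.commute)
qed

lemma main: "AE x in lborel. g_omega_ext (Uop \<phi> f) (\<eta>, u) x = conv (g_omega_ext f (\<eta>, u)) (phi_tilde \<phi>) x"
proof -
  have "\<forall>N. AE x in lborel. x + real N \<in> {0..} \<longrightarrow> g_omega (Uop \<phi> f) (om N) (x + real N) = H N (x + real N)"
    using AE_lborel_shift[OF U_eq_H] by blast
  then have "AE x in lborel. \<forall>N. x + real N \<in> {0..} \<longrightarrow> g_omega (Uop \<phi> f) (om N) (x + real N) = H N (x + real N)"
    by (simp add: AE_all_countable)
  then show ?thesis
  proof eventually_elim
    case (elim x)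
    have "g_omega_ext (Uop \<phi> f) (\<eta>, u) x = g_omega (Uop \<phi> f) (om (idx x)) (x + real (idx x))"
      by (rule ext_idx)
    also have "\<dots> = H (idx x) (x + real (idx x))" using elim idx_props(1)[of x] by simp
    also have "\<dots> = conv E pt x" by (simp add: H_def)
    finally show ?case by (simp add: E_def pt_def)
  qed
qed

end

theorem theorem3p1:
  fixes \<phi> f :: "real \<Rightarrow> complex" and \<eta> :: "nat filter" and u :: real
  assumes "L1_Rplus \<phi>"
    and "Linf_Rplus f"
    and "free_ultrafilter_nat \<eta>" and "u \<in> {0..1}"
  shows "AE x in lborel.
           g_omega_ext (Uop \<phi> f) (\<eta>, u) x = conv (g_omega_ext f (\<eta>, u)) (phi_tilde \<phi>) x"
proof -
  interpret mainctx \<phi> f \<eta> u using assms by unfold_locales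
  show ?thesis by (rule main)
qed


end
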